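(* Let $H$ be a complex infinite-dimensional separable Hilbert space, $\bar e=(e_n)_{n\in\mathbb N}$ an orthonormal basis of $H$, $p_n$ the rank-one projection onto $\mathbb C e_n$, $D(\bar e)$ the algebra of operators diagonalised by $\bar e$, and $\mathbb E_{\bar e}\colon\mathcal B(H)\to D(\bar e)$, $\mathbb E_{\bar e}(a)=\sum_n p_nap_n$ (strong sum). Let $(b_n)_{n\in\mathbb N}$ be a sequence of compact operators on $H$ converging to $0$ in the strong operator topology, such that for every $M\subseteq\mathbb N$ the sum $\sum_{n\in M}b_n$ exists (in the strong operator topology) and belongs to $D(\bar e)+\mathcal K(H)$. Then $\lim_n\|\mathbb E_{\bar e}(b_n)-b_n\|=0$.
   Context: $\mathcal K(H)$ denotes the compact operators on $H$. A sequence is SOT-null if it converges to $0$ in the strong operator topology (pointwise in norm). *)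

theory Defs
  imports "HOL-Analysis.Analysis" "HOL-Library.Function_Algebras"
begin

text \<open>Concrete model of a complex infinite-dimensional separable Hilbert space:
  H = l2(nat), complex square-summable sequences. Vectors are functions
  nat => complex; operators are maps (nat => complex) => (nat => complex),
  only their values on the carrier l2 matter.\<close>

definition ell2 :: "(nat \<Rightarrow> complex) set" where
  "ell2 = {x. summable (\<lambda>k. (cmod (x k))\<^sup>2)}"

definition l2norm :: "(nat \<Rightarrow> complex) \<Rightarrow> real" where
  "l2norm x = sqrt (\<Sum>k. (cmod (x k))\<^sup>2)"

definition l2inner :: "(nat \<Rightarrow> complex) \<Rightarrow> (nat \<Rightarrow> complex) \<Rightarrow> complex" where
  "l2inner x y = (\<Sum>k. x k * cnj (y k))"

definition scaleC_vec :: "complex \<Rightarrow> (nat \<Rightarrow> complex) \<Rightarrow> (nat \<Rightarrow> complex)" where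
  "scaleC_vec c x = (\<lambda>k. c * x k)"

definition bounded_op :: "((nat \<Rightarrow> complex) \<Rightarrow> (nat \<Rightarrow> complex)) \<Rightarrow> bool" where
  "bounded_op T \<longleftrightarrow>
     (\<forall>x\<in>ell2. T x \<in> ell2) \<and>
     (\<forall>x\<in>ell2. \<forall>y\<in>ell2. T (x + y) = T x + T y) \<and>
     (\<forall>c. \<forall>x\<in>ell2. T (scaleC_vec c x) = scaleC_vec c (T x)) \<and>
     (\<exists>K. \<forall>x\<in>ell2. l2norm (T x) \<le> K * l2norm x)"

definition opnorm :: "((nat \<Rightarrow> complex) \<Rightarrow> (nat \<Rightarrow> complex)) \<Rightarrow> real" where
  "opnorm T = (SUP x\<in>{x\<in>ell2. l2norm x \<le> 1}. l2norm (T x))"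

definition compact_op :: "((nat \<Rightarrow> complex) \<Rightarrow> (nat \<Rightarrow> complex)) \<Rightarrow> bool" where
  "compact_op T \<longleftrightarrow> bounded_op T \<and>
     (\<forall>x::nat \<Rightarrow> (nat \<Rightarrow> complex). (\<forall>n. x n \<in> ell2 \<and> l2norm (x n) \<le> 1) \<longrightarrow>
        (\<exists>r y. strict_mono r \<and> y \<in> ell2 \<and> (\<lambda>n. l2norm (T (x (r n)) - y)) \<longlonglongrightarrow> 0))"

definition onb :: "(nat \<Rightarrow> (nat \<Rightarrow> complex)) \<Rightarrow> bool" where
  "onb e \<longleftrightarrow> (\<forall>n. e n \<in> ell2) \<and>
     (\<forall>m n. l2inner (e m) (e n) = (if m = n then 1 else 0)) \<and>
     (\<forall>x\<in>ell2. (\<forall>n. l2inner x (e n) = 0) \<longrightarrow> x = 0)"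

definition proj :: "(nat \<Rightarrow> (nat \<Rightarrow> complex)) \<Rightarrow> nat \<Rightarrow> (nat \<Rightarrow> complex) \<Rightarrow> (nat \<Rightarrow> complex)" where
  "proj e n x = scaleC_vec (l2inner x (e n)) (e n)"

definition diag_op :: "(nat \<Rightarrow> (nat \<Rightarrow> complex)) \<Rightarrow> ((nat \<Rightarrow> complex) \<Rightarrow> (nat \<Rightarrow> complex)) \<Rightarrow> bool" where
  "diag_op e T \<longleftrightarrow> bounded_op T \<and> (\<forall>n. \<exists>c. T (e n) = scaleC_vec c (e n))"

definition has_sot_sum ::
  "(nat \<Rightarrow> ((nat \<Rightarrow> complex) \<Rightarrow> (nat \<Rightarrow> complex))) \<Rightarrow> nat set \<Rightarrow> ((nat \<Rightarrow> complex) \<Rightarrow> (nat \<Rightarrow> complex)) \<Rightarrow> bool" where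
  "has_sot_sum b M S \<longleftrightarrow> bounded_op S \<and>
     (\<forall>x\<in>ell2. \<forall>\<epsilon>>0. \<exists>F0. finite F0 \<and> F0 \<subseteq> M \<and>
        (\<forall>F. finite F \<and> F0 \<subseteq> F \<and> F \<subseteq> M \<longrightarrow> l2norm (S x - (\<Sum>n\<in>F. b n x)) < \<epsilon>))"

definition cond_exp :: "(nat \<Rightarrow> (nat \<Rightarrow> complex)) \<Rightarrow> ((nat \<Rightarrow> complex) \<Rightarrow> (nat \<Rightarrow> complex)) \<Rightarrow> ((nat \<Rightarrow> complex) \<Rightarrow> (nat \<Rightarrow> complex))" where
  "cond_exp e a = (SOME S. has_sot_sum (\<lambda>n. proj e n \<circ> a \<circ> proj e n) UNIV S)"

definition in_diag_plus_compact :: "(nat \<Rightarrow> (nat \<Rightarrow> complex)) \<Rightarrow> ((nat \<Rightarrow> complex) \<Rightarrow> (nat \<Rightarrow> complex)) \<Rightarrow> bool" where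
  "in_diag_plus_compact e S \<longleftrightarrow> (\<exists>d c. diag_op e d \<and> compact_op c \<and> (\<forall>x\<in>ell2. S x = d x + c x))"

definition sot_null :: "(nat \<Rightarrow> ((nat \<Rightarrow> complex) \<Rightarrow> (nat \<Rightarrow> complex))) \<Rightarrow> bool" where
  "sot_null b \<longleftrightarrow> (\<forall>x\<in>ell2. (\<lambda>n. l2norm (b n x)) \<longlonglongrightarrow> 0)"

end

theory Submission
  imports Defs
begin

lemma ell2_iff: "x \<in> ell2 \<longleftrightarrow> summable (\<lambda>k. (cmod (x k))\<^sup>2)"
  by (simp add: ell2_def)

lemma ell2_zero: "(0::nat\<Rightarrow>complex) \<in> ell2"
  by (simp add: ell2_iff)

lemma sq_add_le: "(cmod (a + b))\<^sup>2 \<le> 2 * (cmod a)\<^sup>2 + 2 * (cmod b)\<^sup>2"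
proof -
  have "cmod (a+b) \<le> cmod a + cmod b" by (rule norm_triangle_ineq)
  hence "(cmod (a + b))\<^sup>2 \<le> (cmod a + cmod b)\<^sup>2" by (simp add: power_mono)
  also have "\<dots> \<le> 2 * (cmod a)\<^sup>2 + 2 * (cmod b)\<^sup>2"
  proof -
    have "0 \<le> (cmod a - cmod b)\<^sup>2" by simp
    thus ?thesis unfolding power2_diff power2_sum by linarith
  qed
  finally show ?thesis .
qed

lemma ell2_add: "x \<in> ell2 \<Longrightarrow> y \<in> ell2 \<Longrightarrow> x + y \<in> ell2"
  unfolding ell2_iff
  by (rule summable_comparison_test'[where g="\<lambda>k. 2 * (cmod (x k))\<^sup>2 + 2 * (cmod (y k))\<^sup>2"])
     (auto intro!: summable_add summable_mult sq_add_le)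

lemma ell2_scale: "x \<in> ell2 \<Longrightarrow> (\<lambda>k. c * x k) \<in> ell2"
proof -
  assume "x \<in> ell2"
  hence "summable (\<lambda>k. (cmod c)\<^sup>2 * (cmod (x k))\<^sup>2)"
    unfolding ell2_iff by (rule summable_mult)
  moreover have "(\<lambda>k. (cmod (c * x k))\<^sup>2) = (\<lambda>k. (cmod c)\<^sup>2 * (cmod (x k))\<^sup>2)"
    by (simp add: norm_mult power_mult_distrib)
  ultimately show ?thesis unfolding ell2_iff by simp
qed

lemma ell2_uminus: "x \<in> ell2 \<Longrightarrow> - x \<in> ell2"
  unfolding ell2_iff uminus_apply norm_minus_cancel by assumption

lemma ell2_diff: "x \<in> ell2 \<Longrightarrow> y \<in> ell2 \<Longrightarrow> x - y \<in> ell2"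
  using ell2_add[of x "-y"] ell2_uminus[of y] by simp

lemma ell2_prod_summable:
  assumes "x \<in> ell2" "y \<in> ell2"
  shows "summable (\<lambda>k. norm (x k * cnj (y k)))"
proof (rule summable_comparison_test'[where g="\<lambda>k. (cmod (x k))\<^sup>2 + (cmod (y k))\<^sup>2"])
  show "summable (\<lambda>k. (cmod (x k))\<^sup>2 + (cmod (y k))\<^sup>2)"
    using assms unfolding ell2_iff by (rule summable_add)
  fix n
  have "cmod (x n) * cmod (y n) \<le> (cmod (x n))\<^sup>2 + (cmod (y n))\<^sup>2"
  proof -
    have "0 \<le> (cmod (x n) - cmod (y n))\<^sup>2" by simp
    moreover have "0 \<le> cmod (x n) * cmod (y n)" by simp
    ultimately show ?thesis unfolding power2_diff by linarith
  qed
  moreover have "norm (norm (x n * cnj (y n))) = cmod (x n) * cmod (y n)"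
    by (simp add: norm_mult)
  ultimately show "norm (norm (x n * cnj (y n))) \<le> (cmod (x n))\<^sup>2 + (cmod (y n))\<^sup>2"
    by simp
qed

lemma ell2_prod_summable': "x \<in> ell2 \<Longrightarrow> y \<in> ell2 \<Longrightarrow> summable (\<lambda>k. x k * cnj (y k))"
  by (rule summable_norm_cancel[OF ell2_prod_summable])

lemma l2inner_add_left: "x \<in> ell2 \<Longrightarrow> y \<in> ell2 \<Longrightarrow> z \<in> ell2 \<Longrightarrow>
   l2inner (x + y) z = l2inner x z + l2inner y z"
  unfolding l2inner_def
  by (simp add: distrib_right suminf_add[OF ell2_prod_summable' ell2_prod_summable'])

lemma l2inner_scale_left: "x \<in> ell2 \<Longrightarrow> y \<in> ell2 \<Longrightarrow>
   l2inner (\<lambda>k. c * x k) y = c * l2inner x y"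
  unfolding l2inner_def
  by (simp add: mult.assoc suminf_mult[OF ell2_prod_summable'])

lemma l2inner_commute: "x \<in> ell2 \<Longrightarrow> y \<in> ell2 \<Longrightarrow> l2inner y x = cnj (l2inner x y)"
proof -
  assume x: "x \<in> ell2" and y: "y \<in> ell2"
  have "(\<lambda>k. cnj (x k * cnj (y k))) sums cnj (\<Sum>k. x k * cnj (y k))"
    by (rule sums_cnj[THEN iffD2, OF summable_sums[OF ell2_prod_summable'[OF x y]]])
  thus ?thesis unfolding l2inner_def by (simp add: sums_unique[symmetric] mult.commute)
qed

lemma l2inner_self: "x \<in> ell2 \<Longrightarrow> l2inner x x = of_real (\<Sum>k. (cmod (x k))\<^sup>2)"
proof -
  assume x: "x \<in> ell2"
  have "(\<lambda>k. x k * cnj (x k)) = (\<lambda>k. of_real ((cmod (x k))\<^sup>2))"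
    by (rule ext) (rule complex_norm_square[symmetric])
  thus ?thesis using x unfolding l2inner_def ell2_iff
    by (simp add: suminf_of_real)
qed

lemma l2norm_sq: "x \<in> ell2 \<Longrightarrow> (l2norm x)\<^sup>2 = (\<Sum>k. (cmod (x k))\<^sup>2)"
  unfolding l2norm_def ell2_iff by (simp add: suminf_nonneg)

lemma l2norm_Re: "x \<in> ell2 \<Longrightarrow> l2norm x = sqrt (Re (l2inner x x))"
  by (simp add: l2inner_self l2norm_def)

lemma l2_zero_iff: "x \<in> ell2 \<Longrightarrow> (\<Sum>k. (cmod (x k))\<^sup>2) = 0 \<longleftrightarrow> x = 0"
proof -
  assume "x \<in> ell2"
  hence "(\<Sum>k. (cmod (x k))\<^sup>2) = 0 \<longleftrightarrow> (\<forall>k. (cmod (x k))\<^sup>2 = 0)"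
    unfolding ell2_iff by (rule suminf_eq_zero_iff) simp
  also have "\<dots> \<longleftrightarrow> x = 0" by (simp add: fun_eq_iff)
  finally show ?thesis .
qed

typedef l2 = ell2 morphisms vec mk
  by (rule exI[of _ 0]) (simp add: ell2_zero)

setup_lifting type_definition_l2

instantiation l2 :: real_vector
begin
lift_definition zero_l2 :: l2 is 0 by (rule ell2_zero)
lift_definition plus_l2 :: "l2 \<Rightarrow> l2 \<Rightarrow> l2" is "(+)" by (rule ell2_add)
lift_definition uminus_l2 :: "l2 \<Rightarrow> l2" is uminus by (rule ell2_uminus)
lift_definition minus_l2 :: "l2 \<Rightarrow> l2 \<Rightarrow> l2" is "(-)" by (rule ell2_diff)
lift_definition scaleR_l2 :: "real \<Rightarrow> l2 \<Rightarrow> l2" is "\<lambda>r x k. of_real r * x k"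
  by (rule ell2_scale)
instance
  by standard (transfer; auto simp: fun_eq_iff algebra_simps)+
end

definition cinner :: "l2 \<Rightarrow> l2 \<Rightarrow> complex" where
  "cinner x y = l2inner (vec x) (vec y)"

lift_definition cscale :: "complex \<Rightarrow> l2 \<Rightarrow> l2" is "\<lambda>c x k. c * x k"
  by (rule ell2_scale)

instantiation l2 :: real_inner
begin
definition norm_l2 :: "l2 \<Rightarrow> real" where "norm_l2 x = l2norm (vec x)"
definition sgn_l2 :: "l2 \<Rightarrow> l2" where "sgn_l2 x = x /\<^sub>R norm x"
definition dist_l2 :: "l2 \<Rightarrow> l2 \<Rightarrow> real" where "dist_l2 x y = norm (x - y)"
definition uniformity_l2 :: "(l2 \<times> l2) filter" where
  "uniformity_l2 = (INF e\<in>{0<..}. principal {(x, y). dist x y < e})"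
definition open_l2 :: "l2 set \<Rightarrow> bool" where
  "open_l2 U = (\<forall>x\<in>U. \<forall>\<^sub>F (x', y) in uniformity. x' = x \<longrightarrow> y \<in> U)"
definition inner_l2 :: "l2 \<Rightarrow> l2 \<Rightarrow> real" where "inner_l2 x y = Re (cinner x y)"
instance
proof
  fix x y z :: l2 and r :: real
  show "dist x y = norm (x - y)" by (simp add: dist_l2_def)
  show "sgn x = x /\<^sub>R norm x" by (simp add: sgn_l2_def)
  show "(uniformity :: (l2 \<times> l2) filter) = (INF e\<in>{0<..}. principal {(x, y). dist x y < e})"
    by (simp add: uniformity_l2_def)
  show "open U = (\<forall>x\<in>U. \<forall>\<^sub>F (x', y) in uniformity. x' = x \<longrightarrow> y \<in> U)" for U :: "l2 set"
    by (simp add: open_l2_def)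
  show "inner x y = inner y x"
    unfolding inner_l2_def cinner_def
    using l2inner_commute[OF vec[of x] vec[of y]] by simp
  show "inner (x + y) z = inner x z + inner y z"
    unfolding inner_l2_def cinner_def plus_l2.rep_eq
    by (simp add: l2inner_add_left vec)
  show "inner (r *\<^sub>R x) y = r * inner x y"
    unfolding inner_l2_def cinner_def scaleR_l2.rep_eq
    by (simp add: l2inner_scale_left vec)
  have ix: "inner x x = (\<Sum>k. (cmod (vec x k))\<^sup>2)"
    unfolding inner_l2_def cinner_def using l2inner_self[OF vec[of x]] by simp
  show "0 \<le> inner x x"
    unfolding ix using vec[of x] by (simp add: ell2_iff suminf_nonneg)
  have "x = 0 \<longleftrightarrow> vec x = vec 0" by (simp add: vec_inject)
  also have "\<dots> \<longleftrightarrow> vec x = 0" by (simp add: zero_l2.rep_eq)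
  finally show "(inner x x = 0) = (x = 0)"
    unfolding ix using l2_zero_iff[OF vec[of x]] by simp
  show "norm x = sqrt (inner x x)"
    unfolding inner_l2_def cinner_def norm_l2_def
    by (simp add: l2norm_Re vec)
qed
end

lemmas vec_plus = plus_l2.rep_eq
lemmas vec_minus = minus_l2.rep_eq
lemmas vec_uminus = uminus_l2.rep_eq
lemmas vec_zero = zero_l2.rep_eq
lemmas vec_cscale = cscale.rep_eq

lemma vec_eqI: "vec x = vec y \<Longrightarrow> x = y" by (simp add: vec_inject)

lemma cscale_add_right: "cscale c (x + y) = cscale c x + cscale c y"
  by transfer (simp add: fun_eq_iff distrib_left)
lemma cscale_add_left: "cscale (a + b) x = cscale a x + cscale b x"
  by transfer (simp add: fun_eq_iff distrib_right)
lemma cscale_cscale: "cscale a (cscale b x) = cscale (a * b) x"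
  by transfer (simp add: fun_eq_iff mult.assoc)
lemma cscale_one: "cscale 1 x = x"
  by transfer simp
lemma cscale_zero_left: "cscale 0 x = 0"
  by transfer (simp add: fun_eq_iff)
lemma cscale_zero_right: "cscale c 0 = 0"
  by transfer (simp add: fun_eq_iff)
lemma cscale_minus_right: "cscale c (- x) = - cscale c x"
  by transfer (simp add: fun_eq_iff)
lemma cscale_diff_right: "cscale c (x - y) = cscale c x - cscale c y"
  by transfer (simp add: fun_eq_iff right_diff_distrib)
lemma cscale_minus_left: "cscale (- c) x = - cscale c x"
  by transfer (simp add: fun_eq_iff)
lemma cscale_sum_right: "cscale c (sum f I) = sum (\<lambda>i. cscale c (f i)) I"
  by (induction I rule: infinite_finite_induct) (simp_all add: cscale_zero_right cscale_add_right)
lemma cscale_sum_left: "cscale (sum f I) x = sum (\<lambda>i. cscale (f i) x) I"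
  by (induction I rule: infinite_finite_induct) (simp_all add: cscale_zero_left cscale_add_left)

lemma cinner_add_left: "cinner (x + y) z = cinner x z + cinner y z"
  unfolding cinner_def vec_plus by (rule l2inner_add_left) (simp_all add: vec)

lemma cinner_cscale_left: "cinner (cscale c x) y = c * cinner x y"
  unfolding cinner_def vec_cscale by (rule l2inner_scale_left) (simp_all add: vec)

lemma cinner_commute: "cinner y x = cnj (cinner x y)"
  unfolding cinner_def by (rule l2inner_commute) (simp_all add: vec)

lemma cinner_add_right: "cinner x (y + z) = cinner x y + cinner x z"
  by (subst cinner_commute, subst cinner_add_left) (simp add: cinner_commute[of x])

lemma cinner_cscale_right: "cinner x (cscale c y) = cnj c * cinner x y"
  by (subst cinner_commute, subst cinner_cscale_left) (simp add: cinner_commute[of x])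

lemma cinner_zero_left [simp]: "cinner 0 y = 0"
  using cinner_add_left[of 0 0 y] by simp
lemma cinner_zero_right [simp]: "cinner x 0 = 0"
  using cinner_add_right[of x 0 0] by simp

lemma cinner_minus_left: "cinner (- x) y = - cinner x y"
  using cinner_add_left[of x "-x" y] by (simp add: eq_neg_iff_add_eq_0 add.commute)
lemma cinner_diff_left: "cinner (x - y) z = cinner x z - cinner y z"
  using cinner_add_left[of x "-y" z] cinner_minus_left[of y z] by simp
lemma cinner_minus_right: "cinner x (- y) = - cinner x y"
  using cinner_add_right[of x y "-y"] by (simp add: eq_neg_iff_add_eq_0 add.commute)
lemma cinner_diff_right: "cinner x (y - z) = cinner x y - cinner x z"
  using cinner_add_right[of x y "-z"] cinner_minus_right[of x z] by simp

lemma cinner_sum_left: "cinner (sum f I) y = (\<Sum>i\<in>I. cinner (f i) y)"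
  by (induction I rule: infinite_finite_induct) (simp_all add: cinner_add_left)
lemma cinner_sum_right: "cinner y (sum f I) = (\<Sum>i\<in>I. cinner y (f i))"
  by (induction I rule: infinite_finite_induct) (simp_all add: cinner_add_right)

lemma inner_cinner: "inner x y = Re (cinner x y)"
  by (simp add: inner_l2_def)

lemma cinner_self: "cinner x x = of_real ((norm x)\<^sup>2)"
proof -
  have "cinner x x = of_real (\<Sum>k. (cmod (vec x k))\<^sup>2)"
    unfolding cinner_def by (rule l2inner_self) (simp add: vec)
  moreover have "(norm x)\<^sup>2 = (\<Sum>k. (cmod (vec x k))\<^sup>2)"
    unfolding norm_l2_def by (rule l2norm_sq) (simp add: vec)
  ultimately show ?thesis by simp
qed

lemma norm_cscale: "norm (cscale c x) = cmod c * norm x"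
proof -
  have "of_real ((norm (cscale c x))\<^sup>2) = c * cnj c * cinner x x"
    by (simp only: cinner_self[symmetric] cinner_cscale_left cinner_cscale_right mult.assoc mult.left_commute)
  also have "\<dots> = of_real ((cmod c * norm x)\<^sup>2)"
    by (simp add: cinner_self complex_norm_square[symmetric] power_mult_distrib)
  finally have "(norm (cscale c x))\<^sup>2 = (cmod c * norm x)\<^sup>2"
    using of_real_eq_iff by blast
  thus ?thesis
    by (rule power2_eq_imp_eq) simp_all
qed

lemma cinner_CS: "cmod (cinner x y) \<le> norm x * norm y"
proof (cases "cinner x y = 0")
  case True thus ?thesis by simp
next
  case False
  define w where "w = cinner x y"
  define u where "u = cnj w / of_real (cmod w)"
  have cu: "cmod u = 1" using False by (simp add: u_def w_def norm_divide)
  have "cinner (cscale u x) y = u * w" by (simp add: cinner_cscale_left w_def)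
  also have "u * w = of_real (cmod w)"
    using False unfolding u_def w_def
    by (simp add: complex_norm_square[symmetric] power2_eq_square field_simps)
  finally have "cmod w = inner (cscale u x) y"
    by (simp add: inner_cinner)
  also have "\<dots> \<le> norm (cscale u x) * norm y"
    using Cauchy_Schwarz_ineq2[of "cscale u x" y] by simp
  also have "\<dots> = norm x * norm y" by (simp add: norm_cscale cu)
  finally show ?thesis by (simp add: w_def)
qed

lemma cscale_of_real: "cscale (of_real r) x = r *\<^sub>R x"
  by transfer simp

lemma norm_sq_suminf: "(norm x)\<^sup>2 = (\<Sum>k. (cmod (vec x k))\<^sup>2)"
  unfolding norm_l2_def by (rule l2norm_sq) (simp add: vec)

lemma vec_summable: "summable (\<lambda>k. (cmod (vec x k))\<^sup>2)"
  using vec[of x] by (simp add: ell2_iff)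

lemma partial_le_norm: "(\<Sum>k\<in>A. (cmod (vec x k))\<^sup>2) \<le> (norm x)\<^sup>2" if "finite A"
  unfolding norm_sq_suminf
  by (rule sum_le_suminf[OF vec_summable that]) simp

lemma coord_le: "cmod (vec x k) \<le> norm x"
proof -
  have "(cmod (vec x k))\<^sup>2 \<le> (norm x)\<^sup>2"
    using partial_le_norm[of "{k}" x] by simp
  thus ?thesis by (rule power2_le_imp_le) simp
qed

instance l2 :: complete_space
proof
  fix X :: "nat \<Rightarrow> l2" assume X: "Cauchy X"
  have "Cauchy (\<lambda>n. vec (X n) k)" for k
  proof (rule CauchyI)
    fix e :: real assume "0 < e"
    from CauchyD[OF X this] obtain M where M: "\<forall>m\<ge>M. \<forall>n\<ge>M. norm (X m - X n) < e" by blast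
    have "norm (vec (X m) k - vec (X n) k) < e" if "m \<ge> M" "n \<ge> M" for m n
    proof -
      have a: "norm (X m - X n) < e" using M that by blast
      show ?thesis using coord_le[of "X m - X n" k] a by (simp add: vec_minus)
    qed
    thus "\<exists>M. \<forall>m\<ge>M. \<forall>n\<ge>M. norm (vec (X m) k - vec (X n) k) < e" by blast
  qed
  hence "\<forall>k. \<exists>l. (\<lambda>n. vec (X n) k) \<longlonglongrightarrow> l"
    by (simp add: Cauchy_convergent_iff convergent_def)
  then obtain z where z: "\<And>k. (\<lambda>n. vec (X n) k) \<longlonglongrightarrow> z k" by metis
  have key: "\<exists>N. \<forall>n\<ge>N. \<forall>K. (\<Sum>k<K. (cmod (vec (X n) k - z k))\<^sup>2) \<le> e\<^sup>2" if "e > 0" for e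
  proof -
    from CauchyD[OF X that] obtain N where N: "\<forall>m\<ge>N. \<forall>n\<ge>N. norm (X m - X n) < e" by blast
    have "(\<Sum>k<K. (cmod (vec (X n) k - z k))\<^sup>2) \<le> e\<^sup>2" if n: "n \<ge> N" for n K
    proof -
      have lim: "(\<lambda>m. \<Sum>k<K. (cmod (vec (X n) k - vec (X m) k))\<^sup>2)
          \<longlonglongrightarrow> (\<Sum>k<K. (cmod (vec (X n) k - z k))\<^sup>2)"
        by (intro tendsto_intros z)
      have "\<forall>\<^sub>F m in sequentially. (\<Sum>k<K. (cmod (vec (X n) k - vec (X m) k))\<^sup>2) \<le> e\<^sup>2"
        using eventually_ge_at_top[of N]
      proof eventually_elim
        case (elim m)
        have "(\<Sum>k<K. (cmod (vec (X n) k - vec (X m) k))\<^sup>2) \<le> (norm (X n - X m))\<^sup>2"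
          using partial_le_norm[of "{..<K}" "X n - X m"] by (simp add: vec_minus)
        also have "\<dots> \<le> e\<^sup>2"
          using N n elim by (intro power_mono) (simp_all add: less_imp_le)
        finally show ?case .
      qed
      thus ?thesis by (rule tendsto_upperbound[OF lim]) simp
    qed
    thus ?thesis by blast
  qed
  obtain N1 where N1: "\<forall>n\<ge>N1. \<forall>K. (\<Sum>k<K. (cmod (vec (X n) k - z k))\<^sup>2) \<le> 1"
    using key[of 1] by auto
  have "summable (\<lambda>k. (cmod (vec (X N1) k - z k))\<^sup>2)"
    by (rule summableI_nonneg_bounded[where x=1]) (use N1 in auto)
  hence "vec (X N1) - z \<in> ell2" by (simp add: ell2_iff)
  hence zin: "z \<in> ell2" using ell2_diff[OF vec[of "X N1"]] by fastforce
  have "X \<longlonglongrightarrow> mk z"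
  proof (rule LIMSEQ_I)
    fix r :: real assume r: "0 < r"
    obtain N where N: "\<forall>n\<ge>N. \<forall>K. (\<Sum>k<K. (cmod (vec (X n) k - z k))\<^sup>2) \<le> (r/2)\<^sup>2"
      using key[of "r/2"] r by auto
    have "norm (X n - mk z) < r" if "n \<ge> N" for n
    proof -
      have v: "vec (X n - mk z) = vec (X n) - z" by (simp add: vec_minus mk_inverse zin)
      have "(norm (X n - mk z))\<^sup>2 \<le> (r/2)\<^sup>2"
        unfolding norm_sq_suminf v
        by (rule suminf_le_const) (use vec_summable[of "X n - mk z"] v N that in auto)
      hence "norm (X n - mk z) \<le> r/2" by (rule power2_le_imp_le) (use r in simp)
      thus ?thesis using r by simp
    qed
    thus "\<exists>no. \<forall>n\<ge>no. norm (X n - mk z) < r" by blast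
  qed
  thus "convergent X" by (rule convergentI)
qed

lemma l2norm_mk: "f \<in> ell2 \<Longrightarrow> l2norm f = norm (mk f)"
  by (simp add: norm_l2_def mk_inverse)

lemma l2inner_mk: "f \<in> ell2 \<Longrightarrow> g \<in> ell2 \<Longrightarrow> l2inner f g = cinner (mk f) (mk g)"
  by (simp add: cinner_def mk_inverse)

lemma cinner_cont_left: "cmod (cinner a y - cinner b y) \<le> norm (a - b) * norm y"
  using cinner_CS[of "a - b" y] by (simp add: cinner_diff_left)

lemma tendsto_cinner_left: "(X \<longlonglongrightarrow> a) \<Longrightarrow> (\<lambda>n. cinner (X n) y) \<longlonglongrightarrow> cinner a y"
proof (rule LIMSEQ_I)
  fix r :: real assume X: "X \<longlonglongrightarrow> a" and r: "0 < r"
  have "0 < r / (norm y + 1)"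
    by (rule divide_pos_pos[OF r add_nonneg_pos[OF norm_ge_zero zero_less_one]])
  from LIMSEQ_D[OF X this] obtain N where N: "\<forall>n\<ge>N. norm (X n - a) < r / (norm y + 1)" by blast
  have "norm (cinner (X n) y - cinner a y) < r" if "n \<ge> N" for n
  proof -
    have "norm (cinner (X n) y - cinner a y) \<le> norm (X n - a) * norm y"
      by (rule cinner_cont_left)
    also have "\<dots> \<le> r / (norm y + 1) * norm y"
      using N that by (intro mult_right_mono) (simp_all add: less_imp_le)
    also have "\<dots> < r"
    proof -
      have "r * norm y < r * (norm y + 1)" using r by simp
      thus ?thesis by (simp add: pos_divide_less_eq add_nonneg_pos[OF norm_ge_zero zero_less_one] mult.commute)
    qed
    finally show ?thesis .
  qed
  thus "\<exists>no. \<forall>n\<ge>no. norm (cinner (X n) y - cinner a y) < r" by blast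
qed

lemma sum_le_tail:
  fixes f :: "nat \<Rightarrow> real"
  assumes f: "summable f" "\<And>i. 0 \<le> f i" and A: "finite A" "A \<subseteq> {K..}"
  shows "sum f A \<le> (\<Sum>i. f (i + K))"
proof -
  have inj: "inj_on (\<lambda>i. i - K) A"
  proof (rule inj_onI)
    fix x y assume "x \<in> A" "y \<in> A" "x - K = y - K"
    moreover have "x \<ge> K" "y \<ge> K" using A(2) \<open>x \<in> A\<close> \<open>y \<in> A\<close> by auto
    ultimately show "x = y" by arith
  qed
  have "sum f A = sum (\<lambda>j. f (j + K)) ((\<lambda>i. i - K) ` A)"
    by (subst sum.reindex[OF inj]) (use A(2) in \<open>auto intro!: sum.cong\<close>)
  also have "\<dots> \<le> (\<Sum>i. f (i + K))"
    by (rule sum_le_suminf) (use A f summable_ignore_initial_segment[OF f(1)] in auto)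
  finally show ?thesis .
qed

lemma tail_tendsto:
  fixes f :: "nat \<Rightarrow> real"
  assumes "summable f" "r > 0"
  shows "\<exists>N. \<forall>n\<ge>N. (\<Sum>i. f (i + n)) < r"
proof -
  obtain N where N: "\<forall>n\<ge>N. norm (\<Sum>i. f (i + n)) < r"
    using suminf_exist_split[OF assms(2,1)] by blast
  show ?thesis
  proof (intro exI allI impI)
    fix n assume "n \<ge> N"
    hence "norm (\<Sum>i. f (i + n)) < r" using N by blast
    thus "(\<Sum>i. f (i + n)) < r" by (simp add: abs_less_iff)
  qed
qed

locale onbl =
  fixes E :: "nat \<Rightarrow> l2"
  assumes orth: "\<And>m n. cinner (E m) (E n) = (if m = n then 1 else 0)"
    and compl: "\<And>x. (\<And>n. cinner x (E n) = 0) \<Longrightarrow> x = 0"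
begin

definition comb :: "nat set \<Rightarrow> (nat \<Rightarrow> complex) \<Rightarrow> l2" where
  "comb I \<alpha> = (\<Sum>i\<in>I. cscale (\<alpha> i) (E i))"

definition P :: "nat set \<Rightarrow> l2 \<Rightarrow> l2" where
  "P I x = comb I (\<lambda>i. cinner x (E i))"

lemma cinner_comb: "finite I \<Longrightarrow> cinner (comb I \<alpha>) (E j) = (if j \<in> I then \<alpha> j else 0)"
proof -
  assume I: "finite I"
  have "cinner (comb I \<alpha>) (E j) = (\<Sum>i\<in>I. \<alpha> i * (if i = j then 1 else 0))"
    unfolding comb_def cinner_sum_left cinner_cscale_left orth ..
  also have "\<dots> = (\<Sum>i\<in>I. (if i = j then \<alpha> j else 0))"
    by (rule sum.cong) simp_all
  also have "\<dots> = (if j \<in> I then \<alpha> j else 0)"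
    by (rule sum.delta[OF I])
  finally show ?thesis .
qed

lemma norm_comb_sq: "finite I \<Longrightarrow> (norm (comb I \<alpha>))\<^sup>2 = (\<Sum>i\<in>I. (cmod (\<alpha> i))\<^sup>2)"
proof -
  assume I: "finite I"
  have "cinner (comb I \<alpha>) (comb I \<alpha>) = (\<Sum>i\<in>I. \<alpha> i * cnj (\<alpha> i))"
  proof -
    have "cinner (comb I \<alpha>) (comb I \<alpha>) = (\<Sum>i\<in>I. \<alpha> i * cinner (E i) (comb I \<alpha>))"
      by (simp add: comb_def[of I \<alpha>] cinner_sum_left cinner_cscale_left)
    also have "\<dots> = (\<Sum>i\<in>I. \<alpha> i * cnj (\<alpha> i))"
      by (rule sum.cong) (simp_all add: cinner_commute[of "E _"] cinner_comb[OF I])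
    finally show ?thesis .
  qed
  also have "\<dots> = of_real (\<Sum>i\<in>I. (cmod (\<alpha> i))\<^sup>2)"
    by (simp add: complex_norm_square[symmetric])
  finally have "of_real ((norm (comb I \<alpha>))\<^sup>2) = (of_real (\<Sum>i\<in>I. (cmod (\<alpha> i))\<^sup>2) :: complex)"
    by (simp only: cinner_self)
  thus ?thesis by (simp only: of_real_eq_iff)
qed

lemma comb_diff: "finite A \<Longrightarrow> B \<subseteq> A \<Longrightarrow> comb A \<alpha> - comb B \<alpha> = comb (A - B) \<alpha>"
  unfolding comb_def by (simp add: sum_diff)

lemma cinner_P: "finite I \<Longrightarrow> cinner (P I x) (E j) = (if j \<in> I then cinner x (E j) else 0)"
  unfolding P_def by (rule cinner_comb)

lemma P_orth: "finite I \<Longrightarrow> cinner (x - P I x) (P I x) = 0"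
proof -
  assume I: "finite I"
  have "cinner (x - P I x) (E j) = 0" if "j \<in> I" for j
    using that by (simp add: cinner_diff_left cinner_P[OF I])
  thus ?thesis
    unfolding P_def[of I x] comb_def cinner_sum_right cinner_cscale_right by simp
qed

lemma bessel_split: "finite I \<Longrightarrow> (norm x)\<^sup>2 = (norm (x - P I x))\<^sup>2 + (norm (P I x))\<^sup>2"
proof -
  assume I: "finite I"
  have "orthogonal (x - P I x) (P I x)"
    unfolding orthogonal_def inner_cinner using P_orth[OF I] by simp
  from norm_add_Pythagorean[OF this] show ?thesis by simp
qed

lemma bessel: "finite I \<Longrightarrow> (\<Sum>i\<in>I. (cmod (cinner x (E i)))\<^sup>2) \<le> (norm x)\<^sup>2"
  using bessel_split[of I x] norm_comb_sq[of I "\<lambda>i. cinner x (E i)"]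
  by (simp add: P_def)

lemma norm_P_le: "finite I \<Longrightarrow> norm (P I x) \<le> norm x"
proof -
  assume I: "finite I"
  have "0 \<le> (norm (x - P I x))\<^sup>2" by simp
  hence "(norm (P I x))\<^sup>2 \<le> (norm x)\<^sup>2" using bessel_split[OF I, of x] by linarith
  thus ?thesis by (rule power2_le_imp_le) simp
qed

lemma norm_P_compl_le: "finite I \<Longrightarrow> norm (x - P I x) \<le> norm x"
proof -
  assume I: "finite I"
  have "0 \<le> (norm (P I x))\<^sup>2" by simp
  hence "(norm (x - P I x))\<^sup>2 \<le> (norm x)\<^sup>2" using bessel_split[OF I, of x] by linarith
  thus ?thesis by (rule power2_le_imp_le) simp
qed

lemma coef_summable: "summable (\<lambda>i. (cmod (cinner x (E i)))\<^sup>2)"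
  by (rule summableI_nonneg_bounded[where x="(norm x)\<^sup>2"]) (simp_all add: bessel)

lemma comb_tail:
  assumes \<beta>: "summable (\<lambda>i. (cmod (\<beta> i))\<^sup>2)"
    and F: "finite G" "{..<K} \<subseteq> F" "F \<subseteq> G"
  shows "(norm (comb G \<beta> - comb F \<beta>))\<^sup>2 \<le> (\<Sum>i. (cmod (\<beta> (i + K)))\<^sup>2)"
proof -
  have fF: "finite F" using F finite_subset by blast
  have GF: "G - F \<subseteq> {K..}"
  proof
    fix i assume i: "i \<in> G - F"
    show "i \<in> {K..}"
    proof (rule ccontr)
      assume "i \<notin> {K..}"
      hence "i \<in> {..<K}" by simp
      hence "i \<in> F" using F(2) by blast
      thus False using i by simp
    qed
  qed
  have "(norm (comb G \<beta> - comb F \<beta>))\<^sup>2 = (\<Sum>i\<in>G - F. (cmod (\<beta> i))\<^sup>2)"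
    using F by (simp add: comb_diff norm_comb_sq)
  also have "\<dots> \<le> (\<Sum>i. (cmod (\<beta> (i + K)))\<^sup>2)"
    by (rule sum_le_tail[OF \<beta> _ _ GF]) (use F in auto)
  finally show ?thesis .
qed

lemma comb_lim:
  assumes \<beta>: "summable (\<lambda>i. (cmod (\<beta> i))\<^sup>2)"
  shows "\<exists>z. (\<forall>j. cinner z (E j) = \<beta> j) \<and>
     (\<forall>r>0. \<exists>K. \<forall>F. finite F \<and> {..<K} \<subseteq> F \<longrightarrow> norm (z - comb F \<beta>) < r)"
proof -
  define t where "t K = (\<Sum>i. (cmod (\<beta> (i + K)))\<^sup>2)" for K
  have t: "\<exists>N. \<forall>n\<ge>N. t n < r" if "r > 0" for r
    unfolding t_def by (rule tail_tendsto[OF \<beta> that])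
  have "Cauchy (\<lambda>K. comb {..<K} \<beta>)"
  proof (rule CauchyI)
    fix e :: real assume e: "0 < e"
    obtain N where N: "\<forall>n\<ge>N. t n < e\<^sup>2" using t[of "e\<^sup>2"] e by auto
    have "norm (comb {..<m} \<beta> - comb {..<n} \<beta>) < e" if "m \<ge> N" "n \<ge> N" for m n
    proof -
      have sq: "(norm (comb {..<m} \<beta> - comb {..<n} \<beta>))\<^sup>2 < e\<^sup>2"
      proof (cases "n \<le> m")
        case True
        have "(norm (comb {..<m} \<beta> - comb {..<n} \<beta>))\<^sup>2 \<le> t n"
          unfolding t_def by (rule comb_tail[OF \<beta>]) (use True in auto)
        moreover have "t n < e\<^sup>2" using N that by simp
        ultimately show ?thesis by linarith
      next
        case False
        have "(norm (comb {..<n} \<beta> - comb {..<m} \<beta>))\<^sup>2 \<le> t m"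
          unfolding t_def by (rule comb_tail[OF \<beta>]) (use False in auto)
        moreover have "t m < e\<^sup>2" using N that by simp
        ultimately show ?thesis by (simp add: norm_minus_commute)
      qed
      show ?thesis by (rule power2_less_imp_less[OF sq]) (use e in simp)
    qed
    thus "\<exists>M. \<forall>m\<ge>M. \<forall>n\<ge>M. norm (comb {..<m} \<beta> - comb {..<n} \<beta>) < e" by blast
  qed
  hence "convergent (\<lambda>K. comb {..<K} \<beta>)" by (simp add: Cauchy_convergent_iff)
  then obtain z where z: "(\<lambda>K. comb {..<K} \<beta>) \<longlonglongrightarrow> z"
    unfolding convergent_def by blast
  have unc: "\<exists>K. \<forall>F. finite F \<and> {..<K} \<subseteq> F \<longrightarrow> norm (z - comb F \<beta>) < r" if r: "r > 0" for r
  proof -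
    obtain K where K: "\<forall>n\<ge>K. t n < (r/2)\<^sup>2" using t[of "(r/2)\<^sup>2"] r by auto
    have "norm (z - comb F \<beta>) < r" if F: "finite F" "{..<K} \<subseteq> F" for F
    proof -
      have lim: "(\<lambda>K'. norm (comb {..<K'} \<beta> - comb F \<beta>)) \<longlonglongrightarrow> norm (z - comb F \<beta>)"
        by (intro tendsto_intros z)
      have "\<forall>\<^sub>F K' in sequentially. norm (comb {..<K'} \<beta> - comb F \<beta>) \<le> r/2"
        using eventually_ge_at_top[of "Suc (Max (insert 0 F))"]
      proof eventually_elim
        case (elim K')
        have "F \<subseteq> {..<K'}"
        proof
          fix i assume "i \<in> F"
          hence "i \<le> Max (insert 0 F)" using F by simp
          thus "i \<in> {..<K'}" using elim by simp
        qed
        hence "(norm (comb {..<K'} \<beta> - comb F \<beta>))\<^sup>2 \<le> t K"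
          unfolding t_def by (intro comb_tail[OF \<beta>]) (use F in auto)
        also have "\<dots> \<le> (r/2)\<^sup>2" using K by (simp add: less_imp_le)
        finally show ?case by (rule power2_le_imp_le) (use r in simp)
      qed
      hence "norm (z - comb F \<beta>) \<le> r/2"
        by (rule tendsto_upperbound[OF lim]) simp
      thus ?thesis using r by simp
    qed
    thus ?thesis by blast
  qed
  have "cinner z (E j) = \<beta> j" for j
  proof -
    have lim: "(\<lambda>K. cinner (comb {..<K} \<beta>) (E j)) \<longlonglongrightarrow> cinner z (E j)"
      by (rule tendsto_cinner_left[OF z])
    have "\<forall>\<^sub>F K in sequentially. cinner (comb {..<K} \<beta>) (E j) = \<beta> j"
      using eventually_gt_at_top[of j] by eventually_elim (simp add: cinner_comb)
    hence "(\<lambda>K. cinner (comb {..<K} \<beta>) (E j)) \<longlonglongrightarrow> \<beta> j"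
      by (rule tendsto_eventually)
    thus ?thesis by (rule LIMSEQ_unique[OF lim])
  qed
  thus ?thesis using unc by blast
qed

lemma parseval: "(\<lambda>K. P {..<K} x) \<longlonglongrightarrow> x"
proof -
  obtain z where z1: "\<forall>j. cinner z (E j) = cinner x (E j)"
    and z2: "\<forall>r>0. \<exists>K. \<forall>F. finite F \<and> {..<K} \<subseteq> F \<longrightarrow> norm (z - comb F (\<lambda>i. cinner x (E i))) < r"
    using comb_lim[OF coef_summable[of x]] by blast
  have "x - z = 0"
    by (rule compl) (simp add: cinner_diff_left z1)
  hence xz: "x = z" by simp
  show ?thesis
  proof (rule LIMSEQ_I)
    fix r :: real assume "0 < r"
    then obtain K where K: "\<forall>F. finite F \<and> {..<K} \<subseteq> F \<longrightarrow> norm (z - comb F (\<lambda>i. cinner x (E i))) < r"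
      using z2 by blast
    have "norm (P {..<n} x - x) < r" if "n \<ge> K" for n
      using K[rule_format, of "{..<n}"] that by (auto simp: P_def xz norm_minus_commute)
    thus "\<exists>no. \<forall>n\<ge>no. norm (P {..<n} x - x) < r" by blast
  qed
qed

end

lemma mk_add: "f \<in> ell2 \<Longrightarrow> g \<in> ell2 \<Longrightarrow> mk (f + g) = mk f + mk g"
  by (rule vec_eqI) (simp add: vec_plus mk_inverse ell2_add)

lemma mk_diff: "f \<in> ell2 \<Longrightarrow> g \<in> ell2 \<Longrightarrow> mk (f - g) = mk f - mk g"
  by (rule vec_eqI) (simp add: vec_minus mk_inverse ell2_diff)

lemma mk_zero: "mk 0 = 0"
  by (rule vec_eqI) (simp add: vec_zero mk_inverse ell2_zero)

lemma mk_zero': "mk (\<lambda>k. 0) = 0"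
  using mk_zero by (simp add: zero_fun_def)

lemma sum_ell2: "(\<And>n. n \<in> F \<Longrightarrow> g n \<in> ell2) \<Longrightarrow> (\<Sum>n\<in>F. g n) \<in> ell2"
  by (induction F rule: infinite_finite_induct) (simp_all add: ell2_zero ell2_add)

lemma mk_sum: "(\<And>n. n \<in> F \<Longrightarrow> g n \<in> ell2) \<Longrightarrow> mk (\<Sum>n\<in>F. g n) = (\<Sum>n\<in>F. mk (g n))"
proof (induction F rule: infinite_finite_induct)
  case (infinite F) thus ?case by (simp add: mk_zero mk_zero')
next
  case empty thus ?case by (simp add: mk_zero mk_zero')
next
  case (insert n F)
  have "mk (\<Sum>n\<in>insert n F. g n) = mk (g n + (\<Sum>n\<in>F. g n))"
    using insert.hyps by simp
  also have "\<dots> = mk (g n) + mk (\<Sum>n\<in>F. g n)"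
    by (rule mk_add) (use insert.prems sum_ell2[of F g] in auto)
  also have "\<dots> = (\<Sum>n\<in>insert n F. mk (g n))"
    using insert by simp
  finally show ?case .
qed

lemma mk_scale: "f \<in> ell2 \<Longrightarrow> mk (scaleC_vec c f) = cscale c (mk f)"
  by (rule vec_eqI) (simp add: vec_cscale mk_inverse ell2_scale scaleC_vec_def)

lemma mk_vec: "mk (vec x) = x" by (rule vec_inverse)

definition op :: "((nat \<Rightarrow> complex) \<Rightarrow> (nat \<Rightarrow> complex)) \<Rightarrow> l2 \<Rightarrow> l2" where
  "op T x = mk (T (vec x))"

definition bop :: "(l2 \<Rightarrow> l2) \<Rightarrow> bool" where
  "bop A \<longleftrightarrow> (\<forall>x y. A (x + y) = A x + A y) \<and> (\<forall>c x. A (cscale c x) = cscale c (A x)) \<and>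
     (\<exists>K\<ge>0. \<forall>x. norm (A x) \<le> K * norm x)"

lemma bounded_op_ell2: "bounded_op T \<Longrightarrow> f \<in> ell2 \<Longrightarrow> T f \<in> ell2"
  by (simp add: bounded_op_def)

lemma vec_op: "bounded_op T \<Longrightarrow> vec (op T x) = T (vec x)"
  by (simp add: op_def mk_inverse bounded_op_ell2 vec)

lemma bop_op: assumes T: "bounded_op T" shows "bop (op T)"
proof -
  have add: "\<forall>x\<in>ell2. \<forall>y\<in>ell2. T (x + y) = T x + T y"
    and sc: "\<forall>c. \<forall>x\<in>ell2. T (scaleC_vec c x) = scaleC_vec c (T x)"
    and bd: "\<exists>K. \<forall>x\<in>ell2. l2norm (T x) \<le> K * l2norm x"
    using T by (simp_all add: bounded_op_def)
  have "op T (x + y) = op T x + op T y" for x y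
    unfolding op_def vec_plus using add vec[of x] vec[of y]
    by (simp add: mk_add bounded_op_ell2[OF T] vec)
  moreover have "op T (cscale c x) = cscale c (op T x)" for c x
  proof -
    have "vec (cscale c x) = scaleC_vec c (vec x)" by (simp add: vec_cscale scaleC_vec_def)
    thus ?thesis unfolding op_def using sc vec[of x]
      by (simp add: mk_scale bounded_op_ell2[OF T])
  qed
  moreover obtain K where K: "\<forall>x\<in>ell2. l2norm (T x) \<le> K * l2norm x" using bd by blast
  have "\<forall>x. norm (op T x) \<le> max K 0 * norm x"
  proof
    fix x
    have "norm (op T x) = l2norm (T (vec x))"
      by (simp add: op_def l2norm_mk bounded_op_ell2[OF T] vec)
    also have "\<dots> \<le> K * l2norm (vec x)" using K vec[of x] by blast
    also have "\<dots> \<le> max K 0 * norm x"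
      unfolding norm_l2_def[symmetric] by (rule mult_right_mono) simp_all
    finally show "norm (op T x) \<le> max K 0 * norm x" .
  qed
  ultimately show ?thesis unfolding bop_def by (meson max.cobounded2)
qed

locale bopl =
  fixes A :: "l2 \<Rightarrow> l2"
  assumes bop: "bop A"
begin

lemma add: "A (x + y) = A x + A y" using bop by (simp add: bop_def)
lemma scale: "A (cscale c x) = cscale c (A x)" using bop by (simp add: bop_def)
lemma zero: "A 0 = 0" using add[of 0 0] by simp
lemma minus: "A (- x) = - A x" using add[of x "-x"] zero by (simp add: eq_neg_iff_add_eq_0 add.commute)
lemma diff: "A (x - y) = A x - A y" using add[of x "-y"] minus[of y] by simp
lemma sum: "A (sum f I) = (\<Sum>i\<in>I. A (f i))"
  by (induction I rule: infinite_finite_induct) (simp_all add: zero add)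

definition bnd where "bnd = (SOME K. K \<ge> 0 \<and> (\<forall>x. norm (A x) \<le> K * norm x))"
lemma bnd: "bnd \<ge> 0" "norm (A x) \<le> bnd * norm x"
proof -
  have "\<exists>K. K \<ge> 0 \<and> (\<forall>x. norm (A x) \<le> K * norm x)" using bop by (auto simp: bop_def)
  hence "bnd \<ge> 0 \<and> (\<forall>x. norm (A x) \<le> bnd * norm x)" unfolding bnd_def by (rule someI_ex)
  thus "bnd \<ge> 0" "norm (A x) \<le> bnd * norm x" by auto
qed

end

context onbl
begin

lemma norm_E: "norm (E l) = 1"
proof -
  have "of_real ((norm (E l))\<^sup>2) = (1::complex)" using orth[of l l] by (simp add: cinner_self)
  hence "(norm (E l))\<^sup>2 = 1" by (metis of_real_1 of_real_eq_iff)
  hence "norm (E l) = 1 \<or> norm (E l) = -1" by (simp add: power2_eq_1_iff)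
  thus ?thesis using norm_ge_zero[of "E l"] by linarith
qed

lemma cinner_comb_comb: "finite I \<Longrightarrow> cinner (comb I \<alpha>) (comb I \<beta>) = (\<Sum>i\<in>I. \<alpha> i * cnj (\<beta> i))"
proof -
  assume I: "finite I"
  have "cinner (comb I \<alpha>) (comb I \<beta>) = (\<Sum>i\<in>I. \<alpha> i * cinner (E i) (comb I \<beta>))"
    by (simp add: comb_def[of I \<alpha>] cinner_sum_left cinner_cscale_left)
  also have "\<dots> = (\<Sum>i\<in>I. \<alpha> i * cnj (\<beta> i))"
    by (rule sum.cong) (simp_all add: cinner_commute[of "E _"] cinner_comb[OF I])
  finally show ?thesis .
qed

lemma norm_comb: "finite I \<Longrightarrow> norm (comb I \<alpha>) = sqrt (\<Sum>i\<in>I. (cmod (\<alpha> i))\<^sup>2)"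
  using norm_comb_sq[of I \<alpha>] by (metis norm_ge_zero real_sqrt_unique)

lemma norm_comb_le1: "finite I \<Longrightarrow> (\<Sum>i\<in>I. (cmod (\<alpha> i))\<^sup>2) \<le> 1 \<Longrightarrow> norm (comb I \<alpha>) \<le> 1"
  by (simp add: norm_comb)

lemma bop_comb: "bop A \<Longrightarrow> A (comb I \<alpha>) = (\<Sum>i\<in>I. cscale (\<alpha> i) (A (E i)))"
  unfolding comb_def by (simp add: bopl.sum bopl.scale bopl_def)

lemma compact_small:
  assumes T: "compact_op T" and \<delta>: "\<delta> > 0"
  shows "\<exists>N. \<forall>I \<alpha>. finite I \<and> I \<subseteq> {N..} \<and> (\<Sum>i\<in>I. (cmod (\<alpha> i))\<^sup>2) \<le> 1
           \<longrightarrow> norm (op T (comb I \<alpha>)) < \<delta>"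
proof (rule ccontr)
  assume contra: "\<not> ?thesis"
  have Tb: "bounded_op T" using T by (simp add: compact_op_def)
  define A where "A = op T"
  have bA: "bop A" unfolding A_def by (rule bop_op[OF Tb])
  interpret bopl A by (rule bopl.intro[OF bA])
  define B where "B = bnd"
  have B: "B \<ge> 0" "\<And>x. norm (A x) \<le> B * norm x" unfolding B_def using bnd by auto
  define \<gamma> where "\<gamma> l i = cinner (A (E i)) (E l)" for l i
  have g1: "(\<Sum>i<K. (cmod (\<gamma> l i))\<^sup>2) \<le> B\<^sup>2" for l K
  proof -
    define s where "s = (\<Sum>i<K. (cmod (\<gamma> l i))\<^sup>2)"
    have s0: "s \<ge> 0" unfolding s_def by (simp add: sum_nonneg)
    define w where "w = comb {..<K} (\<lambda>i. cnj (\<gamma> l i))"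
    have "cinner (A w) (E l) = (\<Sum>i<K. cnj (\<gamma> l i) * \<gamma> l i)"
      unfolding w_def bop_comb[OF bA] cinner_sum_left cinner_cscale_left \<gamma>_def ..
    also have "\<dots> = of_real s"
      unfolding s_def of_real_sum
      by (rule sum.cong) (simp_all add: complex_norm_square[symmetric] mult.commute)
    finally have c: "cinner (A w) (E l) = of_real s" .
    have "s = cmod (cinner (A w) (E l))" using c s0 by simp
    also have "\<dots> \<le> norm (A w) * norm (E l)" by (rule cinner_CS)
    also have "\<dots> \<le> B * norm w" using B(2)[of w] by (simp add: norm_E)
    also have "norm w = sqrt s" unfolding w_def s_def by (simp add: norm_comb)
    finally have sB: "s \<le> B * sqrt s" .
    show ?thesis
    proof (cases "s = 0")
      case True thus ?thesis by (simp add: s_def[symmetric])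
    next
      case False
      hence sp: "sqrt s > 0" using s0 by simp
      have h: "sqrt s * sqrt s \<le> B * sqrt s" using sB s0 by simp
      have "sqrt s \<le> B" by (rule mult_right_le_imp_le[OF h sp])
      hence "(sqrt s)\<^sup>2 \<le> B\<^sup>2" using sp by (intro power_mono) simp_all
      thus ?thesis using s0 by (simp add: s_def)
    qed
  qed
  have g2: "summable (\<lambda>i. (cmod (\<gamma> l i))\<^sup>2)" for l
    by (rule summableI_nonneg_bounded[where x="B\<^sup>2"]) (simp_all add: g1)
  define t where "t l N = (\<Sum>i. (cmod (\<gamma> l (i + N)))\<^sup>2)" for l N
  have g3: "cmod (cinner (A (comb I \<alpha>)) (E l)) \<le> sqrt (t l N)"
    if I: "finite I" "I \<subseteq> {N..}" "(\<Sum>i\<in>I. (cmod (\<alpha> i))\<^sup>2) \<le> 1" for I \<alpha> l N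
  proof -
    have "cinner (A (comb I \<alpha>)) (E l) = (\<Sum>i\<in>I. \<alpha> i * \<gamma> l i)"
      unfolding bop_comb[OF bA] cinner_sum_left cinner_cscale_left \<gamma>_def ..
    also have "\<dots> = cinner (comb I \<alpha>) (comb I (\<lambda>i. cnj (\<gamma> l i)))"
      by (simp add: cinner_comb_comb[OF I(1)])
    finally have eq: "cinner (A (comb I \<alpha>)) (E l) = cinner (comb I \<alpha>) (comb I (\<lambda>i. cnj (\<gamma> l i)))" .
    have "cmod (cinner (A (comb I \<alpha>)) (E l)) \<le> norm (comb I \<alpha>) * norm (comb I (\<lambda>i. cnj (\<gamma> l i)))"
      unfolding eq by (rule cinner_CS)
    also have "\<dots> \<le> 1 * norm (comb I (\<lambda>i. cnj (\<gamma> l i)))"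
      by (rule mult_right_mono[OF norm_comb_le1[OF I(1,3)]]) simp
    also have "\<dots> \<le> sqrt (t l N)"
    proof -
      have "(\<Sum>i\<in>I. (cmod (\<gamma> l i))\<^sup>2) \<le> t l N"
        unfolding t_def by (rule sum_le_tail[OF g2 _ I(1,2)]) simp
      thus ?thesis by (simp add: norm_comb[OF I(1)])
    qed
    finally show ?thesis .
  qed
  have tl: "\<exists>N. \<forall>n\<ge>N. t l n < r" if "r > 0" for l r
    unfolding t_def by (rule tail_tendsto[OF g2 that])
  from contra have h1: "\<forall>N. \<exists>I. \<exists>\<alpha>. finite I \<and> I \<subseteq> {N..} \<and> (\<Sum>i\<in>I. (cmod (\<alpha> i))\<^sup>2) \<le> 1
      \<and> \<not> norm (A (comb I \<alpha>)) < \<delta>"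
    unfolding A_def by simp
  from choice[OF h1] obtain II where h2: "\<forall>N. \<exists>\<alpha>. finite (II N) \<and> II N \<subseteq> {N..} \<and>
      (\<Sum>i\<in>II N. (cmod (\<alpha> i))\<^sup>2) \<le> 1 \<and> \<not> norm (A (comb (II N) \<alpha>)) < \<delta>" ..
  from choice[OF h2] obtain AA where h3: "\<forall>N. finite (II N) \<and> II N \<subseteq> {N..} \<and>
      (\<Sum>i\<in>II N. (cmod (AA N i))\<^sup>2) \<le> 1 \<and> \<not> norm (A (comb (II N) (AA N))) < \<delta>" ..
  define Z where "Z N = comb (II N) (AA N)" for N
  have ZI: "finite (II N)" "II N \<subseteq> {N..}" "(\<Sum>i\<in>II N. (cmod (AA N i))\<^sup>2) \<le> 1"
    and Zd: "\<not> norm (A (Z N)) < \<delta>" for N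
    using h3 unfolding Z_def by auto
  have Zn: "norm (Z N) \<le> 1" for N unfolding Z_def by (rule norm_comb_le1[OF ZI(1,3)])
  have Zw: "cmod (cinner (A (Z N)) (E l)) \<le> sqrt (t l N)" for N l
    unfolding Z_def by (rule g3[OF ZI])
  have cT: "\<forall>x::nat \<Rightarrow> (nat \<Rightarrow> complex). (\<forall>n. x n \<in> ell2 \<and> l2norm (x n) \<le> 1) \<longrightarrow>
        (\<exists>r y. strict_mono r \<and> y \<in> ell2 \<and> (\<lambda>n. l2norm (T (x (r n)) - y)) \<longlonglongrightarrow> 0)"
    using T unfolding compact_op_def by (rule conjunct2)
  have hZ: "\<forall>n. vec (Z n) \<in> ell2 \<and> l2norm (vec (Z n)) \<le> 1"
    using Zn by (simp add: vec norm_l2_def[symmetric])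
  obtain r y where r: "strict_mono r" and y: "y \<in> ell2"
    and lim0: "(\<lambda>n. l2norm (T (vec (Z (r n))) - y)) \<longlonglongrightarrow> 0"
    using mp[OF spec[OF cT, of "\<lambda>n. vec (Z n)"] hZ] by (elim exE conjE)
  have "l2norm (T (vec (Z (r n))) - y) = norm (A (Z (r n)) - mk y)" for n
  proof -
    have "T (vec (Z (r n))) = vec (A (Z (r n)))" unfolding A_def by (simp add: vec_op[OF Tb])
    thus ?thesis by (simp add: l2norm_mk ell2_diff vec y mk_diff mk_vec)
  qed
  with lim0 have "(\<lambda>n. norm (A (Z (r n)) - mk y)) \<longlonglongrightarrow> 0" by simp
  hence limA: "(\<lambda>n. A (Z (r n))) \<longlonglongrightarrow> mk y"
    by (simp add: tendsto_norm_zero_iff LIM_zero_iff)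
  have "cinner (mk y) (E l) = 0" for l
  proof -
    have l1: "(\<lambda>n. cinner (A (Z (r n))) (E l)) \<longlonglongrightarrow> cinner (mk y) (E l)"
      by (rule tendsto_cinner_left[OF limA])
    have "(\<lambda>n. cinner (A (Z (r n))) (E l)) \<longlonglongrightarrow> 0"
    proof (rule LIMSEQ_I)
      fix e :: real assume e: "0 < e"
      obtain N where N: "\<forall>n\<ge>N. t l n < e\<^sup>2" using tl[of "e\<^sup>2" l] e by auto
      have "norm (cinner (A (Z (r n))) (E l) - 0) < e" if "n \<ge> N" for n
      proof -
        have "r n \<ge> n" using seq_suble[OF r] by simp
        hence "t l (r n) < e\<^sup>2" using N that by simp
        hence "sqrt (t l (r n)) < sqrt (e\<^sup>2)" by (rule real_sqrt_less_mono)
        hence "sqrt (t l (r n)) < e" using e by simp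
        thus ?thesis using Zw[of "r n" l] by simp
      qed
      thus "\<exists>no. \<forall>n\<ge>no. norm (cinner (A (Z (r n))) (E l) - 0) < e" by blast
    qed
    thus ?thesis using LIMSEQ_unique[OF l1] by simp
  qed
  hence "mk y = 0" by (rule compl)
  hence "(\<lambda>n. norm (A (Z (r n)))) \<longlonglongrightarrow> 0"
    using tendsto_norm[OF limA] by simp
  then obtain N where "\<forall>n\<ge>N. norm (norm (A (Z (r n))) - 0) < \<delta>"
    using LIMSEQ_D[OF _ \<delta>] by blast
  hence "norm (A (Z (r N))) < \<delta>" by simp
  thus False using Zd[of "r N"] by simp
qed

end

lemma vec_sum: "vec (sum f F) = (\<Sum>n\<in>F. vec (f n))"
  by (induction F rule: infinite_finite_induct) (simp_all add: vec_zero vec_plus)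

lemma norm_vec: "l2norm (vec x) = norm x"
  by (simp add: norm_l2_def)

lemma bounded_linear_cscale: "bounded_linear (cscale c)"
proof (rule bounded_linear_intro[where K="cmod c"])
  show "cscale c (x + y) = cscale c x + cscale c y" for x y by (rule cscale_add_right)
  show "cscale c (r *\<^sub>R x) = r *\<^sub>R cscale c x" for r x
    by (simp add: cscale_of_real[symmetric] cscale_cscale mult.commute)
  show "norm (cscale c x) \<le> norm x * cmod c" for x by (simp add: norm_cscale mult.commute)
qed

lemma tendsto_cscale: "X \<longlonglongrightarrow> a \<Longrightarrow> (\<lambda>n. cscale c (X n)) \<longlonglongrightarrow> cscale c a"
  by (rule bounded_linear.tendsto[OF bounded_linear_cscale])

lemma sot_l2:
  assumes S: "has_sot_sum b M S" and b: "\<And>n. bounded_op (b n)" and r: "r > 0"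
  shows "\<exists>F0. finite F0 \<and> F0 \<subseteq> M \<and> (\<forall>F. finite F \<and> F0 \<subseteq> F \<and> F \<subseteq> M \<longrightarrow>
            norm (op S x - (\<Sum>n\<in>F. op (b n) x)) < r)"
proof -
  have Sb: "bounded_op S" using S by (simp add: has_sot_sum_def)
  have "\<forall>x\<in>ell2. \<forall>\<epsilon>>0. \<exists>F0. finite F0 \<and> F0 \<subseteq> M \<and>
        (\<forall>F. finite F \<and> F0 \<subseteq> F \<and> F \<subseteq> M \<longrightarrow> l2norm (S x - (\<Sum>n\<in>F. b n x)) < \<epsilon>)"
    using S unfolding has_sot_sum_def by (rule conjunct2)
  from this[rule_format, OF vec[of x] r] have "\<exists>F0. finite F0 \<and> F0 \<subseteq> M \<and>
        (\<forall>F. finite F \<and> F0 \<subseteq> F \<and> F \<subseteq> M \<longrightarrow> l2norm (S (vec x) - (\<Sum>n\<in>F. b n (vec x))) < r)" .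
  then obtain F0 where F0: "finite F0" "F0 \<subseteq> M"
    "\<forall>F. finite F \<and> F0 \<subseteq> F \<and> F \<subseteq> M \<longrightarrow> l2norm (S (vec x) - (\<Sum>n\<in>F. b n (vec x))) < r"
    by (elim exE conjE) (rule that, assumption+)
  have eq: "l2norm (S (vec x) - (\<Sum>n\<in>F. b n (vec x))) = norm (op S x - (\<Sum>n\<in>F. op (b n) x))" for F
  proof -
    have i1: "S (vec x) \<in> ell2" by (rule bounded_op_ell2[OF Sb vec])
    have i3: "\<And>n. n \<in> F \<Longrightarrow> b n (vec x) \<in> ell2" by (rule bounded_op_ell2[OF b vec])
    have i2: "(\<Sum>n\<in>F. b n (vec x)) \<in> ell2" by (rule sum_ell2[OF i3])
    have "mk (S (vec x) - (\<Sum>n\<in>F. b n (vec x))) = mk (S (vec x)) - (\<Sum>n\<in>F. mk (b n (vec x)))"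
      by (simp only: mk_diff[OF i1 i2] mk_sum[OF i3])
    also have "\<dots> = op S x - (\<Sum>n\<in>F. op (b n) x)" by (simp only: op_def)
    finally show ?thesis by (simp only: l2norm_mk[OF ell2_diff[OF i1 i2]])
  qed
  show ?thesis
  proof (intro exI[of _ F0] conjI allI impI)
    show "finite F0" "F0 \<subseteq> M" by (rule F0(1), rule F0(2))
    fix F assume "finite F \<and> F0 \<subseteq> F \<and> F \<subseteq> M"
    moreover have "finite F \<and> F0 \<subseteq> F \<and> F \<subseteq> M \<longrightarrow>
        l2norm (S (vec x) - (\<Sum>n\<in>F. b n (vec x))) < r" using F0(3) by (rule spec)
    ultimately have "l2norm (S (vec x) - (\<Sum>n\<in>F. b n (vec x))) < r" by (rule rev_mp)
    thus "norm (op S x - (\<Sum>n\<in>F. op (b n) x)) < r" by (simp only: eq)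
  qed
qed

context onbl
begin

definition lam :: "((nat \<Rightarrow> complex) \<Rightarrow> (nat \<Rightarrow> complex)) \<Rightarrow> nat \<Rightarrow> complex" where
  "lam a m = cinner (op a (E m)) (E m)"

abbreviation ev :: "nat \<Rightarrow> nat \<Rightarrow> complex" where "ev \<equiv> (\<lambda>n. vec (E n))"

lemma proj_l2: "f \<in> ell2 \<Longrightarrow> proj ev n f = vec (cscale (cinner (mk f) (E n)) (E n))"
  unfolding proj_def
  by (simp add: l2inner_mk vec mk_vec scaleC_vec_def vec_cscale)

lemma term_l2:
  assumes a: "bounded_op a" and f: "f \<in> ell2"
  shows "proj ev n (a (proj ev n f)) = vec (cscale (cinner (mk f) (E n) * lam a n) (E n))"
proof -
  define c where "c = cinner (mk f) (E n)"
  have "a (proj ev n f) = vec (op a (cscale c (E n)))"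
    unfolding proj_l2[OF f] c_def[symmetric] by (simp add: vec_op[OF a])
  also have "\<dots> = vec (cscale c (op a (E n)))"
    using bopl.scale[OF bopl.intro[OF bop_op[OF a]]] by simp
  finally have "a (proj ev n f) = vec (cscale c (op a (E n)))" .
  hence "proj ev n (a (proj ev n f)) = vec (cscale (cinner (cscale c (op a (E n))) (E n)) (E n))"
    by (simp add: proj_l2 vec mk_vec)
  thus ?thesis by (simp add: cinner_cscale_left lam_def c_def)
qed

lemma comb_add_coef: "comb I (\<lambda>i. \<alpha> i + \<beta> i) = comb I \<alpha> + comb I \<beta>"
  unfolding comb_def by (simp add: cscale_add_left sum.distrib)

lemma comb_scale_coef: "comb I (\<lambda>i. c * \<alpha> i) = cscale c (comb I \<alpha>)"
  unfolding comb_def by (simp add: cscale_sum_right cscale_cscale)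

lemma lam_bound: "bounded_op a \<Longrightarrow> cmod (lam a m) \<le> bopl.bnd (op a)"
proof -
  assume a: "bounded_op a"
  interpret bopl "op a" by (rule bopl.intro[OF bop_op[OF a]])
  have "cmod (lam a m) \<le> norm (op a (E m)) * norm (E m)" unfolding lam_def by (rule cinner_CS)
  also have "\<dots> \<le> bnd" using bnd(2)[of "E m"] by (simp add: norm_E)
  finally show ?thesis .
qed

lemma cond_exp_ex:
  assumes a: "bounded_op a"
  shows "\<exists>S. has_sot_sum (\<lambda>n. proj ev n \<circ> a \<circ> proj ev n) UNIV S"
proof -
  define B where "B = bopl.bnd (op a)"
  have B0: "B \<ge> 0" unfolding B_def by (rule bopl.bnd(1)[OF bopl.intro[OF bop_op[OF a]]])
  have lB: "cmod (lam a m) \<le> B" for m unfolding B_def by (rule lam_bound[OF a])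
  define \<beta> where "\<beta> = (\<lambda>x m. cinner x (E m) * lam a m)"
  have bsq: "(cmod (\<beta> x m))\<^sup>2 \<le> B\<^sup>2 * (cmod (cinner x (E m)))\<^sup>2" for x m
  proof -
    have "cmod (\<beta> x m) \<le> cmod (cinner x (E m)) * B"
      unfolding \<beta>_def norm_mult by (rule mult_left_mono[OF lB]) simp
    hence "(cmod (\<beta> x m))\<^sup>2 \<le> (cmod (cinner x (E m)) * B)\<^sup>2" by (rule power_mono) simp
    thus ?thesis by (simp add: power_mult_distrib mult.commute)
  qed
  have bsum: "summable (\<lambda>m. (cmod (\<beta> x m))\<^sup>2)" for x
    by (rule summable_comparison_test'[where g="\<lambda>m. B\<^sup>2 * (cmod (cinner x (E m)))\<^sup>2" and N=0])
       (simp_all add: bsq summable_mult coef_summable)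
  define Z where "Z x = lim (\<lambda>K. comb {..<K} (\<beta> x))" for x
  have Zp: "\<exists>K. \<forall>F. finite F \<and> {..<K} \<subseteq> F \<longrightarrow> norm (Z x - comb F (\<beta> x)) < r"
    and Zl: "(\<lambda>K. comb {..<K} (\<beta> x)) \<longlonglongrightarrow> Z x" if "r > 0" for x r
  proof -
    obtain z where z: "\<forall>r>0. \<exists>K. \<forall>F. finite F \<and> {..<K} \<subseteq> F \<longrightarrow> norm (z - comb F (\<beta> x)) < r"
      using comb_lim[OF bsum[of x]] by (elim exE conjE) (rule that, assumption+)
    have zl: "(\<lambda>K. comb {..<K} (\<beta> x)) \<longlonglongrightarrow> z"
    proof (rule LIMSEQ_I)
      fix r :: real assume "0 < r"
      from z[rule_format, OF this]
      obtain K where K: "\<forall>F. finite F \<and> {..<K} \<subseteq> F \<longrightarrow> norm (z - comb F (\<beta> x)) < r" ..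
      have "norm (comb {..<n} (\<beta> x) - z) < r" if "n \<ge> K" for n
        using K[rule_format, of "{..<n}"] that by (simp add: norm_minus_commute)
      thus "\<exists>no. \<forall>n\<ge>no. norm (comb {..<n} (\<beta> x) - z) < r" by blast
    qed
    hence zZ: "Z x = z" unfolding Z_def by (rule limI)
    show "(\<lambda>K. comb {..<K} (\<beta> x)) \<longlonglongrightarrow> Z x" using zl zZ by simp
    show "\<exists>K. \<forall>F. finite F \<and> {..<K} \<subseteq> F \<longrightarrow> norm (Z x - comb F (\<beta> x)) < r"
      using z that zZ by simp
  qed
  have Zl': "(\<lambda>K. comb {..<K} (\<beta> x)) \<longlonglongrightarrow> Z x" for x using Zl[of 1] by simp
  have Zadd: "Z (x + y) = Z x + Z y" for x y
  proof -
    have "(\<lambda>K. comb {..<K} (\<beta> (x + y))) = (\<lambda>K. comb {..<K} (\<beta> x) + comb {..<K} (\<beta> y))"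
      by (simp add: \<beta>_def cinner_add_left distrib_right comb_add_coef)
    hence "(\<lambda>K. comb {..<K} (\<beta> (x + y))) \<longlonglongrightarrow> Z x + Z y"
      using tendsto_add[OF Zl'[of x] Zl'[of y]] by simp
    thus ?thesis using LIMSEQ_unique[OF Zl'[of "x + y"]] by simp
  qed
  have Zsc: "Z (cscale c x) = cscale c (Z x)" for c x
  proof -
    have "(\<lambda>K. comb {..<K} (\<beta> (cscale c x))) = (\<lambda>K. cscale c (comb {..<K} (\<beta> x)))"
      by (simp add: \<beta>_def cinner_cscale_left mult.assoc comb_scale_coef)
    hence "(\<lambda>K. comb {..<K} (\<beta> (cscale c x))) \<longlonglongrightarrow> cscale c (Z x)"
      using tendsto_cscale[OF Zl'[of x]] by simp
    thus ?thesis using LIMSEQ_unique[OF Zl'[of "cscale c x"]] by simp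
  qed
  have Zb: "norm (Z x) \<le> B * norm x" for x
  proof -
    have "norm (comb {..<K} (\<beta> x)) \<le> B * norm x" for K
    proof -
      have "(norm (comb {..<K} (\<beta> x)))\<^sup>2 = (\<Sum>m<K. (cmod (\<beta> x m))\<^sup>2)" by (simp add: norm_comb_sq)
      also have "\<dots> \<le> (\<Sum>m<K. B\<^sup>2 * (cmod (cinner x (E m)))\<^sup>2)" by (rule sum_mono) (rule bsq)
      also have "\<dots> = B\<^sup>2 * (\<Sum>m<K. (cmod (cinner x (E m)))\<^sup>2)" by (simp add: sum_distrib_left)
      also have "\<dots> \<le> B\<^sup>2 * (norm x)\<^sup>2" by (rule mult_left_mono) (simp_all add: bessel)
      also have "\<dots> = (B * norm x)\<^sup>2" by (simp add: power_mult_distrib)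
      finally show ?thesis by (rule power2_le_imp_le) (simp add: B0)
    qed
    thus ?thesis
      using tendsto_upperbound[OF tendsto_norm[OF Zl'[of x]]] by simp
  qed
  define S where "S f = vec (Z (mk f))" for f
  have Sb: "bounded_op S"
    unfolding bounded_op_def
  proof (intro conjI ballI allI)
    show "S f \<in> ell2" for f unfolding S_def by (rule vec)
    show "S (f + g) = S f + S g" if "f \<in> ell2" "g \<in> ell2" for f g
      unfolding S_def using that by (simp add: mk_add Zadd vec_plus)
    show "S (scaleC_vec c f) = scaleC_vec c (S f)" if "f \<in> ell2" for c f
      unfolding S_def by (simp only: mk_scale[OF that] Zsc) (simp add: vec_cscale scaleC_vec_def)
    show "\<exists>K. \<forall>f\<in>ell2. l2norm (S f) \<le> K * l2norm f"
      by (rule exI[of _ B]) (simp add: S_def norm_vec Zb l2norm_mk)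
  qed
  have "has_sot_sum (\<lambda>n. proj ev n \<circ> a \<circ> proj ev n) UNIV S"
    unfolding has_sot_sum_def
  proof (intro conjI Sb ballI allI impI)
    fix f :: "nat \<Rightarrow> complex" and \<epsilon> :: real assume f: "f \<in> ell2" and e: "\<epsilon> > 0"
    from Zp[OF e, of "mk f"]
    obtain K where K: "\<forall>F. finite F \<and> {..<K} \<subseteq> F \<longrightarrow> norm (Z (mk f) - comb F (\<beta> (mk f))) < \<epsilon>" ..
    have lt: "l2norm (S f - (\<Sum>n\<in>F. (proj ev n \<circ> a \<circ> proj ev n) f)) < \<epsilon>"
      if F: "finite F" "{..<K} \<subseteq> F" for F
    proof -
      have "(\<Sum>n\<in>F. (proj ev n \<circ> a \<circ> proj ev n) f) = vec (comb F (\<beta> (mk f)))"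
        by (simp add: term_l2[OF a f] comb_def vec_sum \<beta>_def)
      hence "S f - (\<Sum>n\<in>F. (proj ev n \<circ> a \<circ> proj ev n) f) = vec (Z (mk f) - comb F (\<beta> (mk f)))"
        by (simp add: S_def vec_minus)
      moreover have "norm (Z (mk f) - comb F (\<beta> (mk f))) < \<epsilon>"
        using K F by simp
      ultimately show ?thesis by (simp only: norm_vec)
    qed
    show "\<exists>F0. finite F0 \<and> F0 \<subseteq> UNIV \<and> (\<forall>F. finite F \<and> F0 \<subseteq> F \<and> F \<subseteq> UNIV \<longrightarrow>
            l2norm (S f - (\<Sum>n\<in>F. (proj ev n \<circ> a \<circ> proj ev n) f)) < \<epsilon>)"
    proof (intro exI[of _ "{..<K}"] conjI allI impI)
      fix F assume "finite F \<and> {..<K} \<subseteq> F \<and> F \<subseteq> UNIV"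
      thus "l2norm (S f - (\<Sum>n\<in>F. (proj ev n \<circ> a \<circ> proj ev n) f)) < \<epsilon>"
        using lt by simp
    qed simp_all
  qed
  thus ?thesis by (rule exI[where x=S])
qed

lemma cond_exp_comb:
  assumes a: "bounded_op a" and S: "has_sot_sum (\<lambda>n. proj ev n \<circ> a \<circ> proj ev n) UNIV S"
    and I: "finite I"
  shows "op S (comb I \<alpha>) = comb I (\<lambda>i. \<alpha> i * lam a i)"
proof -
  define x where "x = comb I \<alpha>"
  define w where "w = comb I (\<lambda>i. \<alpha> i * lam a i)"
  have Sb: "bounded_op S" using S by (simp add: has_sot_sum_def)
  have small: "norm (op S x - w) < r" if r: "r > 0" for r
  proof -
    have "\<forall>x\<in>ell2. \<forall>\<epsilon>>0. \<exists>F0. finite F0 \<and> F0 \<subseteq> UNIV \<and>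
        (\<forall>F. finite F \<and> F0 \<subseteq> F \<and> F \<subseteq> UNIV \<longrightarrow>
           l2norm (S x - (\<Sum>n\<in>F. (proj ev n \<circ> a \<circ> proj ev n) x)) < \<epsilon>)"
      using S unfolding has_sot_sum_def by (rule conjunct2)
    from this[rule_format, OF vec[of x] r]
    obtain F0 where F0: "finite F0" "\<forall>F. finite F \<and> F0 \<subseteq> F \<longrightarrow>
           l2norm (S (vec x) - (\<Sum>n\<in>F. (proj ev n \<circ> a \<circ> proj ev n) (vec x))) < r"
      by (elim exE conjE) (rule that, simp_all)
    define F where "F = F0 \<union> I"
    have fF: "finite F" and unconditional: "F0 \<subseteq> F" "I \<subseteq> F" using F0 I by (auto simp: F_def)
    have "(\<Sum>n\<in>F. (proj ev n \<circ> a \<circ> proj ev n) (vec x))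
        = vec (comb F (\<lambda>n. cinner x (E n) * lam a n))"
      by (simp add: term_l2[OF a vec] mk_vec comb_def vec_sum)
    also have "comb F (\<lambda>n. cinner x (E n) * lam a n) = comb F (\<lambda>n. if n \<in> I then \<alpha> n * lam a n else 0)"
      unfolding comb_def by (rule sum.cong) (simp_all add: x_def cinner_comb[OF I])
    also have "\<dots> = w"
    proof -
      have "comb F (\<lambda>n. if n \<in> I then \<alpha> n * lam a n else 0)
          = (\<Sum>n\<in>I. cscale (if n \<in> I then \<alpha> n * lam a n else 0) (E n))"
        unfolding comb_def
        by (rule sum.mono_neutral_right[OF fF unconditional(2)]) (simp add: cscale_zero_left)
      also have "\<dots> = w" unfolding w_def comb_def by (rule sum.cong) simp_all
      finally show ?thesis .
    qed
    finally have sumeq: "(\<Sum>n\<in>F. (proj ev n \<circ> a \<circ> proj ev n) (vec x)) = vec w" .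
    have "l2norm (S (vec x) - (\<Sum>n\<in>F. (proj ev n \<circ> a \<circ> proj ev n) (vec x))) < r"
      using F0(2) fF unconditional(1) by simp
    hence "l2norm (S (vec x) - vec w) < r" by (simp only: sumeq)
    moreover have "l2norm (S (vec x) - vec w) = norm (op S x - w)"
      by (simp add: l2norm_mk ell2_diff bounded_op_ell2[OF Sb vec] vec mk_diff mk_vec op_def)
    ultimately show ?thesis by simp
  qed
  have "op S x = w"
  proof (rule ccontr)
    assume "op S x \<noteq> w"
    hence "norm (op S x - w) > 0" by simp
    from small[OF this] show False by simp
  qed
  thus ?thesis unfolding x_def w_def by simp
qed

lemma E_comb: "E m = comb {m} (\<lambda>_. 1)"
  by (simp add: comb_def cscale_one)

end

context onbl
begin

definition Phi :: "nat set \<Rightarrow> (nat \<Rightarrow> complex) \<Rightarrow> nat \<Rightarrow> (l2 \<Rightarrow> l2) \<Rightarrow> l2" where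
  "Phi I \<alpha> L C = P {..<L} (C (comb I \<alpha>)) - comb I (\<lambda>i. \<alpha> i * cinner (C (E i)) (E i))"

lemma norm_comb_le_sum: "norm (comb I \<gamma>) \<le> (\<Sum>i\<in>I. cmod (\<gamma> i))"
proof -
  have "norm (comb I \<gamma>) \<le> (\<Sum>i\<in>I. norm (cscale (\<gamma> i) (E i)))"
    unfolding comb_def by (rule norm_sum)
  also have "\<dots> = (\<Sum>i\<in>I. cmod (\<gamma> i))" by (simp add: norm_cscale norm_E)
  finally show ?thesis .
qed

lemma P_comb: "finite I \<Longrightarrow> I \<subseteq> {..<L} \<Longrightarrow> P {..<L} (comb I \<gamma>) = comb I \<gamma>"
proof -
  assume I: "finite I" "I \<subseteq> {..<L}"
  have "P {..<L} (comb I \<gamma>) = (\<Sum>i<L. cscale (if i \<in> I then \<gamma> i else 0) (E i))"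
    unfolding P_def comb_def[of "{..<L}"] by (simp add: cinner_comb[OF I(1)])
  also have "\<dots> = (\<Sum>i\<in>I. cscale (if i \<in> I then \<gamma> i else 0) (E i))"
    by (rule sum.mono_neutral_right) (use I in \<open>auto simp: cscale_zero_left\<close>)
  also have "\<dots> = comb I \<gamma>" unfolding comb_def by (rule sum.cong) simp_all
  finally show ?thesis .
qed

lemma P_add: "P J (x + y) = P J x + P J y"
  unfolding P_def comb_def by (simp add: cinner_add_left cscale_add_left sum.distrib)

lemma P_zero: "P J 0 = 0"
  using P_add[of J 0 0] by simp

lemma P_sum: "P J (sum f F) = (\<Sum>n\<in>F. P J (f n))"
  by (induction F rule: infinite_finite_induct) (simp_all add: P_zero P_add)

lemma P_minus: "P J (- x) = - P J x"
  using P_add[of J x "-x"] P_zero by (simp add: eq_neg_iff_add_eq_0 add.commute)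

lemma P_diff: "P J (x - y) = P J x - P J y"
  using P_add[of J x "-y"] P_minus[of J y] by simp

lemma Phi_add: "Phi I \<alpha> L (\<lambda>x. C1 x + C2 x) = Phi I \<alpha> L C1 + Phi I \<alpha> L C2"
  unfolding Phi_def by (simp add: P_add cinner_add_left distrib_left comb_add_coef)

lemma Phi_zero: "Phi I \<alpha> L (\<lambda>x. 0) = 0"
  unfolding Phi_def by (simp add: P_zero comb_def cscale_zero_left)

lemma Phi_sum: "Phi I \<alpha> L (\<lambda>x. \<Sum>n\<in>F. C n x) = (\<Sum>n\<in>F. Phi I \<alpha> L (C n))"
proof (induction F rule: infinite_finite_induct)
  case (infinite F) thus ?case by (simp add: Phi_zero)
next
  case empty thus ?case by (simp add: Phi_zero)
next
  case (insert n F)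
  have "Phi I \<alpha> L (\<lambda>x. \<Sum>n\<in>insert n F. C n x) = Phi I \<alpha> L (\<lambda>x. C n x + (\<Sum>n\<in>F. C n x))"
    using insert.hyps by simp
  also have "\<dots> = Phi I \<alpha> L (C n) + Phi I \<alpha> L (\<lambda>x. \<Sum>n\<in>F. C n x)"
    by (rule Phi_add)
  finally show ?case using insert by simp
qed

lemma Phi_minus: "Phi I \<alpha> L (\<lambda>x. - C x) = - Phi I \<alpha> L C"
  using Phi_add[of I \<alpha> L C "\<lambda>x. - C x"] Phi_zero[of I \<alpha> L]
  by (simp add: eq_neg_iff_add_eq_0 add.commute)

lemma Phi_diff: "Phi I \<alpha> L (\<lambda>x. C1 x - C2 x) = Phi I \<alpha> L C1 - Phi I \<alpha> L C2"
  using Phi_add[of I \<alpha> L C1 "\<lambda>x. - C2 x"] Phi_minus[of I \<alpha> L C2] by simp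

lemma coef_le1: "finite I \<Longrightarrow> (\<Sum>i\<in>I. (cmod (\<alpha> i))\<^sup>2) \<le> 1 \<Longrightarrow> i \<in> I \<Longrightarrow> cmod (\<alpha> i) \<le> 1"
proof -
  assume I: "finite I" "(\<Sum>i\<in>I. (cmod (\<alpha> i))\<^sup>2) \<le> 1" "i \<in> I"
  have "(cmod (\<alpha> i))\<^sup>2 \<le> (\<Sum>i\<in>I. (cmod (\<alpha> i))\<^sup>2)"
    by (rule member_le_sum) (use I in auto)
  hence "(cmod (\<alpha> i))\<^sup>2 \<le> 1\<^sup>2" using I(2) by simp
  thus ?thesis by (rule power2_le_imp_le) simp
qed

lemma Phi_bound0:
  assumes I: "finite I" and \<alpha>: "\<And>i. i \<in> I \<Longrightarrow> cmod (\<alpha> i) \<le> 1"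
  shows "norm (Phi I \<alpha> L C) \<le> norm (C (comb I \<alpha>)) + (\<Sum>i\<in>I. norm (C (E i)))"
proof -
  have "norm (Phi I \<alpha> L C) \<le> norm (P {..<L} (C (comb I \<alpha>))) + norm (comb I (\<lambda>i. \<alpha> i * cinner (C (E i)) (E i)))"
    unfolding Phi_def by (rule norm_triangle_ineq4)
  also have "norm (P {..<L} (C (comb I \<alpha>))) \<le> norm (C (comb I \<alpha>))" by (rule norm_P_le) simp
  also have "norm (comb I (\<lambda>i. \<alpha> i * cinner (C (E i)) (E i))) \<le> (\<Sum>i\<in>I. cmod (\<alpha> i * cinner (C (E i)) (E i)))"
    by (rule norm_comb_le_sum)
  also have "\<dots> \<le> (\<Sum>i\<in>I. norm (C (E i)))"
  proof (rule sum_mono)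
    fix i assume i: "i \<in> I"
    have "cmod (\<alpha> i * cinner (C (E i)) (E i)) = cmod (\<alpha> i) * cmod (cinner (C (E i)) (E i))"
      by (simp add: norm_mult)
    also have "\<dots> \<le> 1 * norm (C (E i))"
    proof (rule mult_mono)
      show "cmod (\<alpha> i) \<le> 1" by (rule \<alpha>[OF i])
      show "cmod (cinner (C (E i)) (E i)) \<le> norm (C (E i))"
        using cinner_CS[of "C (E i)" "E i"] by (simp add: norm_E)
    qed simp_all
    finally show "cmod (\<alpha> i * cinner (C (E i)) (E i)) \<le> norm (C (E i))" by simp
  qed
  finally show ?thesis by simp
qed

lemma Phi_bound1:
  assumes C: "bop C" and I: "finite I" "I \<subseteq> {..<T}" and \<alpha>: "\<And>i. i \<in> I \<Longrightarrow> cmod (\<alpha> i) \<le> 1"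
  shows "norm (Phi I \<alpha> L C) \<le> 2 * (\<Sum>m<T. norm (C (E m)))"
proof -
  have s: "(\<Sum>i\<in>I. norm (C (E i))) \<le> (\<Sum>m<T. norm (C (E m)))"
    by (rule sum_mono2) (use I in auto)
  have "norm (C (comb I \<alpha>)) = norm (\<Sum>i\<in>I. cscale (\<alpha> i) (C (E i)))"
    by (simp add: bop_comb[OF C])
  also have "\<dots> \<le> (\<Sum>i\<in>I. norm (cscale (\<alpha> i) (C (E i))))" by (rule norm_sum)
  also have "\<dots> \<le> (\<Sum>i\<in>I. norm (C (E i)))"
  proof (rule sum_mono)
    fix i assume "i \<in> I"
    hence "cmod (\<alpha> i) * norm (C (E i)) \<le> 1 * norm (C (E i))"
      by (intro mult_right_mono \<alpha>) simp_all
    thus "norm (cscale (\<alpha> i) (C (E i))) \<le> norm (C (E i))" by (simp add: norm_cscale)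
  qed
  finally have c: "norm (C (comb I \<alpha>)) \<le> (\<Sum>i\<in>I. norm (C (E i)))" .
  have "norm (Phi I \<alpha> L C) \<le> norm (C (comb I \<alpha>)) + (\<Sum>i\<in>I. norm (C (E i)))"
    by (rule Phi_bound0[OF I(1) \<alpha>])
  thus ?thesis using c s by linarith
qed

lemma Phi_bound2:
  assumes I: "finite I" "I \<subseteq> {N..}" "(\<Sum>i\<in>I. (cmod (\<alpha> i))\<^sup>2) \<le> 1"
    and C: "\<forall>I' \<alpha>'. finite I' \<and> I' \<subseteq> {N..} \<and> (\<Sum>i\<in>I'. (cmod (\<alpha>' i))\<^sup>2) \<le> 1 \<longrightarrow> norm (C (comb I' \<alpha>')) < \<delta>"
  shows "norm (Phi I \<alpha> L C) \<le> 2 * \<delta>"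
proof -
  have h: "norm (C (comb I' \<alpha>')) < \<delta>"
    if "finite I'" "I' \<subseteq> {N..}" "(\<Sum>i\<in>I'. (cmod (\<alpha>' i))\<^sup>2) \<le> 1" for I' \<alpha>'
  proof -
    have "finite I' \<and> I' \<subseteq> {N..} \<and> (\<Sum>i\<in>I'. (cmod (\<alpha>' i))\<^sup>2) \<le> 1 \<longrightarrow> norm (C (comb I' \<alpha>')) < \<delta>"
      by (rule spec[OF spec[OF C]])
    thus ?thesis by (rule mp) (intro conjI that)
  qed
  have c1: "norm (C (comb I \<alpha>)) < \<delta>" by (rule h[OF I])
  have ce: "norm (C (E i)) < \<delta>" if "i \<in> I" for i
  proof -
    have "{i} \<subseteq> {N..}" using I(2) that by auto
    hence "norm (C (comb {i} (\<lambda>_. 1))) < \<delta>" by (intro h) simp_all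
    thus ?thesis by (simp add: E_comb[symmetric])
  qed
  have d0: "\<delta> \<ge> 0" using c1 norm_ge_zero[of "C (comb I \<alpha>)"] by linarith
  have "norm (Phi I \<alpha> L C) \<le> norm (P {..<L} (C (comb I \<alpha>))) + norm (comb I (\<lambda>i. \<alpha> i * cinner (C (E i)) (E i)))"
    unfolding Phi_def by (rule norm_triangle_ineq4)
  also have "norm (P {..<L} (C (comb I \<alpha>))) \<le> norm (C (comb I \<alpha>))" by (rule norm_P_le) simp
  also have "norm (comb I (\<lambda>i. \<alpha> i * cinner (C (E i)) (E i))) \<le> \<delta>"
  proof -
    have "(norm (comb I (\<lambda>i. \<alpha> i * cinner (C (E i)) (E i))))\<^sup>2
        = (\<Sum>i\<in>I. (cmod (\<alpha> i * cinner (C (E i)) (E i)))\<^sup>2)" by (rule norm_comb_sq[OF I(1)])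
    also have "\<dots> \<le> (\<Sum>i\<in>I. (cmod (\<alpha> i))\<^sup>2 * \<delta>\<^sup>2)"
    proof (rule sum_mono)
      fix i assume i: "i \<in> I"
      have "cmod (cinner (C (E i)) (E i)) \<le> \<delta>"
        using cinner_CS[of "C (E i)" "E i"] ce[OF i] by (simp add: norm_E)
      hence "(cmod (cinner (C (E i)) (E i)))\<^sup>2 \<le> \<delta>\<^sup>2" by (rule power_mono) simp
      hence le: "(cmod (\<alpha> i))\<^sup>2 * (cmod (cinner (C (E i)) (E i)))\<^sup>2 \<le> (cmod (\<alpha> i))\<^sup>2 * \<delta>\<^sup>2"
        by (rule mult_left_mono) simp
      have eq: "(cmod (\<alpha> i * cinner (C (E i)) (E i)))\<^sup>2 = (cmod (\<alpha> i))\<^sup>2 * (cmod (cinner (C (E i)) (E i)))\<^sup>2"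
        by (simp only: norm_mult power_mult_distrib)
      show "(cmod (\<alpha> i * cinner (C (E i)) (E i)))\<^sup>2 \<le> (cmod (\<alpha> i))\<^sup>2 * \<delta>\<^sup>2"
        unfolding eq by (rule le)
    qed
    also have "\<dots> = \<delta>\<^sup>2 * (\<Sum>i\<in>I. (cmod (\<alpha> i))\<^sup>2)" by (simp only: mult.commute[of "\<delta>\<^sup>2"] sum_distrib_right)
    also have "\<dots> \<le> \<delta>\<^sup>2 * 1" by (rule mult_left_mono[OF I(3)]) simp
    finally have "(norm (comb I (\<lambda>i. \<alpha> i * cinner (C (E i)) (E i))))\<^sup>2 \<le> \<delta>\<^sup>2" by simp
    thus ?thesis by (rule power2_le_imp_le) (rule d0)
  qed
  finally show ?thesis using c1 by simp
qed

lemma Phi_diag: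
  assumes D: "bop D" and Dd: "\<And>i. \<exists>\<mu>. D (E i) = cscale \<mu> (E i)"
    and I: "finite I" "I \<subseteq> {..<L}"
  shows "Phi I \<alpha> L D = 0"
proof -
  have "\<forall>i. \<exists>\<mu>. D (E i) = cscale \<mu> (E i)" using Dd by (rule allI)
  from choice[OF this] obtain \<mu> where \<mu>': "\<forall>i. D (E i) = cscale (\<mu> i) (E i)" ..
  hence \<mu>: "\<And>i. D (E i) = cscale (\<mu> i) (E i)" by (rule spec)
  have "D (comb I \<alpha>) = (\<Sum>i\<in>I. cscale (\<alpha> i) (D (E i)))" by (rule bop_comb[OF D])
  also have "\<dots> = comb I (\<lambda>i. \<alpha> i * \<mu> i)" by (simp add: \<mu> comb_def cscale_cscale)
  finally have "D (comb I \<alpha>) = comb I (\<lambda>i. \<alpha> i * \<mu> i)" .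
  moreover have "cinner (D (E i)) (E i) = \<mu> i" for i
    by (simp add: \<mu> cinner_cscale_left orth)
  ultimately show ?thesis unfolding Phi_def by (simp add: P_comb[OF I])
qed

end

lemma bop_diff: "bop C1 \<Longrightarrow> bop C2 \<Longrightarrow> bop (\<lambda>x. C1 x - C2 x)"
proof -
  assume c1: "bop C1" and c2: "bop C2"
  interpret a: bopl C1 by (rule bopl.intro[OF c1])
  interpret b: bopl C2 by (rule bopl.intro[OF c2])
  have "norm (C1 x - C2 x) \<le> (a.bnd + b.bnd) * norm x" for x
  proof -
    have "norm (C1 x - C2 x) \<le> norm (C1 x) + norm (C2 x)" by (rule norm_triangle_ineq4)
    also have "\<dots> \<le> a.bnd * norm x + b.bnd * norm x" using a.bnd(2) b.bnd(2) by (rule add_mono)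
    finally show ?thesis by (simp add: distrib_right)
  qed
  moreover have "a.bnd + b.bnd \<ge> 0" using a.bnd(1) b.bnd(1) by simp
  ultimately show ?thesis unfolding bop_def
    by (auto simp: a.add b.add a.scale b.scale cscale_diff_right)
qed

lemma bop_bounded_linear: "bop C \<Longrightarrow> bounded_linear C"
proof -
  assume c: "bop C"
  interpret bopl C by (rule bopl.intro[OF c])
  show ?thesis
  proof (rule bounded_linear_intro[where K=bnd])
    show "C (x + y) = C x + C y" for x y by (rule add)
    show "C (r *\<^sub>R x) = r *\<^sub>R C x" for r x
      using scale[of "of_real r" x] by (simp add: cscale_of_real)
    show "norm (C x) \<le> norm x * bnd" for x using bnd(2)[of x] by (simp add: mult.commute)
  qed
qed

lemma bop_tendsto: "bop C \<Longrightarrow> X \<longlonglongrightarrow> a \<Longrightarrow> (\<lambda>n. C (X n)) \<longlonglongrightarrow> C a"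
  by (rule bounded_linear.tendsto[OF bop_bounded_linear])

locale mainl = onbl +
  fixes b :: "nat \<Rightarrow> ((nat \<Rightarrow> complex) \<Rightarrow> (nat \<Rightarrow> complex))" and \<epsilon> :: real
  assumes cb: "\<And>n. compact_op (b n)"
    and sn: "sot_null b"
    and H: "\<And>M. \<exists>S. has_sot_sum b M S \<and> in_diag_plus_compact ev S"
    and eps: "\<epsilon> > 0"
    and bad: "\<And>N. \<exists>n\<ge>N. \<exists>x. norm x \<le> 1 \<and> \<epsilon> < norm (op (cond_exp ev (b n)) x - op (b n) x)"
begin

definition "B n = op (b n)"
definition "CE n = op (cond_exp ev (b n))"
definition "A n x = CE n x - B n x"
definition "\<eta> = \<epsilon> / 2"

lemma bb: "bounded_op (b n)" using cb[of n] by (simp add: compact_op_def)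
lemma bB: "bop (B n)" unfolding B_def by (rule bop_op[OF bb])

lemma CE_sot: "has_sot_sum (\<lambda>m. proj ev m \<circ> b n \<circ> proj ev m) UNIV (cond_exp ev (b n))"
  unfolding cond_exp_def by (rule someI_ex[OF cond_exp_ex[OF bb]])

lemma bCE: "bop (CE n)"
  unfolding CE_def by (rule bop_op) (use CE_sot[of n] in \<open>simp add: has_sot_sum_def\<close>)

lemma bA: "bop (A n)"
  unfolding A_def[abs_def] by (rule bop_diff[OF bCE bB])

lemma CE_comb: "finite I \<Longrightarrow> CE n (comb I \<alpha>) = comb I (\<lambda>i. \<alpha> i * cinner (B n (E i)) (E i))"
  unfolding CE_def B_def using cond_exp_comb[OF bb CE_sot] by (simp add: lam_def)

lemma lamB: "cmod (cinner (B n (E i)) (E i)) \<le> norm (B n (E i))"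
  using cinner_CS[of "B n (E i)" "E i"] by (simp add: norm_E)

lemma coef_le: "norm x \<le> 1 \<Longrightarrow> cmod (cinner x (E i)) \<le> 1"
  using cinner_CS[of x "E i"] by (simp add: norm_E)

lemma lemA: "(\<lambda>n. \<Sum>m<N. norm (B n (E m))) \<longlonglongrightarrow> 0"
proof -
  have "(\<lambda>n. norm (B n (E m))) \<longlonglongrightarrow> 0" for m
  proof -
    have "\<forall>x\<in>ell2. (\<lambda>n. l2norm (b n x)) \<longlonglongrightarrow> 0" using sn by (simp add: sot_null_def)
    hence l: "(\<lambda>n. l2norm (b n (vec (E m)))) \<longlonglongrightarrow> 0" using vec[of "E m"] by (rule bspec)
    have "l2norm (b n (vec (E m))) = norm (B n (E m))" for n
      unfolding B_def by (simp add: norm_vec[symmetric] vec_op[OF bb])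
    thus ?thesis using l by simp
  qed
  hence "(\<lambda>n. \<Sum>m<N. norm (B n (E m))) \<longlonglongrightarrow> (\<Sum>m<N. 0)"
    by (intro tendsto_sum) simp
  thus ?thesis by simp
qed

lemma eta_pos: "\<eta> > 0" using eps by (simp add: \<eta>_def)

lemma stepL:
  assumes \<delta>: "\<delta> > 0"
  shows "\<exists>n I \<alpha> L. n \<ge> N0 \<and> (\<Sum>m<N. norm (B n (E m))) < \<delta> \<and> finite I \<and> I \<subseteq> {N..<L} \<and>
     (\<Sum>i\<in>I. (cmod (\<alpha> i))\<^sup>2) \<le> 1 \<and> \<eta> \<le> norm (P {..<L} (A n (comb I \<alpha>)))"
proof -
  have md: "min \<delta> (\<epsilon>/8) > 0" using \<delta> eps by simp
  from LIMSEQ_D[OF lemA[of N] md] obtain N1 where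
    N1: "\<forall>n\<ge>N1. norm ((\<Sum>m<N. norm (B n (E m))) - 0) < min \<delta> (\<epsilon>/8)" by blast
  from bad[of "max N0 N1"] obtain n x0 where n: "n \<ge> max N0 N1" and x0: "norm x0 \<le> 1"
    and big: "\<epsilon> < norm (op (cond_exp ev (b n)) x0 - op (b n) x0)" by blast
  have big': "\<epsilon> < norm (A n x0)" using big by (simp add: A_def CE_def B_def)
  define s where "s = (\<Sum>m<N. norm (B n (E m)))"
  have s0: "s \<ge> 0" unfolding s_def by (simp add: sum_nonneg)
  have sl: "s < min \<delta> (\<epsilon>/8)" using N1 n s0 unfolding s_def by auto
  define c where "c m = cinner x0 (E m)" for m
  have c1: "cmod (c m) \<le> 1" for m unfolding c_def by (rule coef_le[OF x0])
  interpret Ab: bopl "A n" by (rule bopl.intro[OF bA])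
  interpret Bb: bopl "B n" by (rule bopl.intro[OF bB])
  have a: "norm (A n (P {..<N} x0)) \<le> 2 * s"
  proof -
    have "A n (P {..<N} x0) = comb {..<N} (\<lambda>m. c m * cinner (B n (E m)) (E m)) - (\<Sum>m<N. cscale (c m) (B n (E m)))"
      unfolding A_def P_def c_def[symmetric] by (simp add: CE_comb bop_comb[OF bB])
    hence "norm (A n (P {..<N} x0)) \<le> norm (comb {..<N} (\<lambda>m. c m * cinner (B n (E m)) (E m)))
        + norm (\<Sum>m<N. cscale (c m) (B n (E m)))"
      by (simp add: norm_triangle_ineq4)
    also have "norm (comb {..<N} (\<lambda>m. c m * cinner (B n (E m)) (E m))) \<le> s"
    proof -
      have "norm (comb {..<N} (\<lambda>m. c m * cinner (B n (E m)) (E m))) \<le> (\<Sum>m<N. cmod (c m * cinner (B n (E m)) (E m)))"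
        by (rule norm_comb_le_sum)
      also have "\<dots> \<le> s" unfolding s_def
      proof (rule sum_mono)
        fix m
        have "cmod (c m * cinner (B n (E m)) (E m)) \<le> 1 * norm (B n (E m))"
          unfolding norm_mult by (rule mult_mono[OF c1 lamB]) simp_all
        thus "cmod (c m * cinner (B n (E m)) (E m)) \<le> norm (B n (E m))" by simp
      qed
      finally show ?thesis .
    qed
    also have "norm (\<Sum>m<N. cscale (c m) (B n (E m))) \<le> s"
    proof -
      have "norm (\<Sum>m<N. cscale (c m) (B n (E m))) \<le> (\<Sum>m<N. norm (cscale (c m) (B n (E m))))"
        by (rule norm_sum)
      also have "\<dots> \<le> s" unfolding s_def
      proof (rule sum_mono)
        fix m
        have "cmod (c m) * norm (B n (E m)) \<le> 1 * norm (B n (E m))"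
          by (rule mult_right_mono[OF c1]) simp
        thus "norm (cscale (c m) (B n (E m))) \<le> norm (B n (E m))" by (simp add: norm_cscale)
      qed
      finally show ?thesis .
    qed
    finally show ?thesis by simp
  qed
  have limA: "(\<lambda>K. A n (P {..<K} x0)) \<longlonglongrightarrow> A n x0"
    by (rule bop_tendsto[OF bA parseval])
  have e8: "\<epsilon>/8 > 0" using eps by simp
  from LIMSEQ_D[OF limA e8] obtain K0 where K0: "\<forall>K\<ge>K0. norm (A n (P {..<K} x0) - A n x0) < \<epsilon>/8"
    by blast
  define K where "K = max K0 N"
  have K1: "norm (A n (P {..<K} x0) - A n x0) < \<epsilon>/8" using K0 by (simp add: K_def)
  define x1 where "x1 = comb {N..<K} c"
  have x1eq: "x1 = P {..<K} x0 - P {..<N} x0"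
  proof -
    have "P {..<K} x0 - P {..<N} x0 = comb ({..<K} - {..<N}) c"
      unfolding P_def c_def[symmetric] by (rule comb_diff) (auto simp: K_def)
    also have "{..<K} - {..<N} = {N..<K}" by auto
    finally show ?thesis by (simp add: x1_def)
  qed
  have Ax1: "A n x1 = A n (P {..<K} x0) - A n (P {..<N} x0)" unfolding x1eq by (rule Ab.diff)
  have nx1: "5 * \<epsilon> / 8 < norm (A n x1)"
  proof -
    have "norm (A n x0) \<le> norm (A n x1) + norm (A n (P {..<K} x0) - A n x0) + norm (A n (P {..<N} x0))"
    proof -
      have "A n x0 = A n x1 - (A n (P {..<K} x0) - A n x0) + A n (P {..<N} x0)"
        unfolding Ax1 by simp
      hence "norm (A n x0) \<le> norm (A n x1 - (A n (P {..<K} x0) - A n x0)) + norm (A n (P {..<N} x0))"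
        by (metis norm_triangle_ineq)
      also have "norm (A n x1 - (A n (P {..<K} x0) - A n x0)) \<le> norm (A n x1) + norm (A n (P {..<K} x0) - A n x0)"
        by (rule norm_triangle_ineq4)
      finally show ?thesis by simp
    qed
    thus ?thesis using big' K1 a sl by simp
  qed
  have csum: "(\<Sum>i\<in>{N..<K}. (cmod (c i))\<^sup>2) \<le> 1"
  proof -
    have "(\<Sum>i\<in>{N..<K}. (cmod (c i))\<^sup>2) \<le> (norm x0)\<^sup>2" unfolding c_def by (rule bessel) simp
    also have "\<dots> \<le> 1" using x0 by (simp add: power_le_one)
    finally show ?thesis .
  qed
  from LIMSEQ_D[OF parseval[of "A n x1"] e8] obtain L0 where
    L0: "\<forall>L\<ge>L0. norm (P {..<L} (A n x1) - A n x1) < \<epsilon>/8" by blast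
  define L where "L = max L0 K"
  have L1: "norm (P {..<L} (A n x1) - A n x1) < \<epsilon>/8" using L0 by (simp add: L_def)
  have "norm (A n x1) \<le> norm (P {..<L} (A n x1)) + norm (P {..<L} (A n x1) - A n x1)"
    by (metis norm_minus_commute norm_triangle_sub)
  hence fin: "\<eta> \<le> norm (P {..<L} (A n (comb {N..<K} c)))"
    using nx1 L1 unfolding x1_def \<eta>_def by simp
  show ?thesis
  proof (intro exI conjI)
    show "n \<ge> N0" using n by simp
    show "(\<Sum>m<N. norm (B n (E m))) < \<delta>" using sl by (simp add: s_def)
    show "finite {N..<K}" by simp
    show "{N..<K} \<subseteq> {N..<L}" by (auto simp: L_def)
    show "(\<Sum>i\<in>{N..<K}. (cmod (c i))\<^sup>2) \<le> 1" by (rule csum)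
    show "\<eta> \<le> norm (P {..<L} (A n (comb {N..<K} c)))" by (rule fin)
  qed
qed

end

context mainl
begin

definition stp :: "nat \<Rightarrow> nat \<Rightarrow> real \<Rightarrow> nat \<times> nat set \<times> (nat \<Rightarrow> complex) \<times> nat" where
  "stp N0 N \<delta> = (SOME p. case p of (n, I, \<alpha>, L) \<Rightarrow> n \<ge> N0 \<and> (\<Sum>m<N. norm (B n (E m))) < \<delta> \<and>
     finite I \<and> I \<subseteq> {N..<L} \<and> (\<Sum>i\<in>I. (cmod (\<alpha> i))\<^sup>2) \<le> 1 \<and> \<eta> \<le> norm (P {..<L} (A n (comb I \<alpha>))))"

lemma stp:
  assumes \<delta>: "\<delta> > 0" and eq: "stp N0 N \<delta> = (n, I, \<alpha>, L)"
  shows "n \<ge> N0 \<and> (\<Sum>m<N. norm (B n (E m))) < \<delta> \<and>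
     finite I \<and> I \<subseteq> {N..<L} \<and> (\<Sum>i\<in>I. (cmod (\<alpha> i))\<^sup>2) \<le> 1 \<and> \<eta> \<le> norm (P {..<L} (A n (comb I \<alpha>)))"
proof -
  obtain n' I' \<alpha>' L' where h: "n' \<ge> N0 \<and> (\<Sum>m<N. norm (B n' (E m))) < \<delta> \<and> finite I' \<and> I' \<subseteq> {N..<L'} \<and>
     (\<Sum>i\<in>I'. (cmod (\<alpha>' i))\<^sup>2) \<le> 1 \<and> \<eta> \<le> norm (P {..<L'} (A n' (comb I' \<alpha>')))"
    using stepL[OF \<delta>, of N0 N] by (elim exE) (rule that)
  have ex: "\<exists>p. case p of (n, I, \<alpha>, L) \<Rightarrow> n \<ge> N0 \<and> (\<Sum>m<N. norm (B n (E m))) < \<delta> \<and>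
     finite I \<and> I \<subseteq> {N..<L} \<and> (\<Sum>i\<in>I. (cmod (\<alpha> i))\<^sup>2) \<le> 1 \<and> \<eta> \<le> norm (P {..<L} (A n (comb I \<alpha>)))"
    by (rule exI[of _ "(n', I', \<alpha>', L')"]) (simp only: prod.case h)
  have "case stp N0 N \<delta> of (n, I, \<alpha>, L) \<Rightarrow> n \<ge> N0 \<and> (\<Sum>m<N. norm (B n (E m))) < \<delta> \<and>
     finite I \<and> I \<subseteq> {N..<L} \<and> (\<Sum>i\<in>I. (cmod (\<alpha> i))\<^sup>2) \<le> 1 \<and> \<eta> \<le> norm (P {..<L} (A n (comb I \<alpha>)))"
    unfolding stp_def by (rule someI_ex[OF ex])
  thus ?thesis unfolding eq by (simp only: prod.case)
qed

definition cN :: "nat \<Rightarrow> real \<Rightarrow> nat" where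
  "cN n \<delta> = (SOME N. \<forall>I \<alpha>. finite I \<and> I \<subseteq> {N..} \<and> (\<Sum>i\<in>I. (cmod (\<alpha> i))\<^sup>2) \<le> 1
      \<longrightarrow> norm (B n (comb I \<alpha>)) < \<delta>)"

lemma cN: "\<delta> > 0 \<Longrightarrow> \<forall>I \<alpha>. finite I \<and> I \<subseteq> {cN n \<delta>..} \<and> (\<Sum>i\<in>I. (cmod (\<alpha> i))\<^sup>2) \<le> 1
      \<longrightarrow> norm (B n (comb I \<alpha>)) < \<delta>"
  unfolding cN_def B_def by (rule someI_ex[OF compact_small[OF cb]])

lemma cN_mono:
  assumes "\<delta> > 0" "cN n \<delta> \<le> N"
  shows "\<forall>I \<alpha>. finite I \<and> I \<subseteq> {N..} \<and> (\<Sum>i\<in>I. (cmod (\<alpha> i))\<^sup>2) \<le> 1 \<longrightarrow> norm (B n (comb I \<alpha>)) < \<delta>"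
proof (intro allI impI)
  fix I \<alpha> assume h: "finite I \<and> I \<subseteq> {N..} \<and> (\<Sum>i\<in>I. (cmod (\<alpha> i))\<^sup>2) \<le> 1"
  have "finite I \<and> I \<subseteq> {cN n \<delta>..} \<and> (\<Sum>i\<in>I. (cmod (\<alpha> i))\<^sup>2) \<le> 1" using h assms(2) by auto
  moreover have "finite I \<and> I \<subseteq> {cN n \<delta>..} \<and> (\<Sum>i\<in>I. (cmod (\<alpha> i))\<^sup>2) \<le> 1 \<longrightarrow> norm (B n (comb I \<alpha>)) < \<delta>"
    by (rule spec[OF spec[OF cN[OF assms(1)]]])
  ultimately show "norm (B n (comb I \<alpha>)) < \<delta>" by (rule rev_mp)
qed

definition dl :: "nat \<Rightarrow> real" where "dl k = \<eta> / 2 ^ (k + 4)"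

lemma dl_pos: "dl k > 0" unfolding dl_def using eta_pos by simp

definition nxt :: "nat \<Rightarrow> nat \<Rightarrow> nat \<Rightarrow> nat \<times> nat set \<times> (nat \<Rightarrow> complex) \<times> nat \<times> nat" where
  "nxt k N0 N = (case stp N0 N (dl k) of (n, I, \<alpha>, L) \<Rightarrow> (n, I, \<alpha>, L, max (Suc (max N L)) (cN n (dl k))))"

primrec st :: "nat \<Rightarrow> nat \<times> nat set \<times> (nat \<Rightarrow> complex) \<times> nat \<times> nat" where
  "st 0 = nxt 0 0 0"
| "st (Suc k) = nxt (Suc k) (Suc (fst (st k))) (snd (snd (snd (snd (st k)))))"

definition "nn k = fst (st k)"
definition "II k = fst (snd (st k))"
definition "AA k = fst (snd (snd (st k)))"
definition "LL k = fst (snd (snd (snd (st k))))"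
definition "TT k = snd (snd (snd (snd (st k))))"
definition "low k = (case k of 0 \<Rightarrow> 0 | Suc j \<Rightarrow> TT j)"
definition "N0of k = (case k of 0 \<Rightarrow> 0 | Suc j \<Rightarrow> Suc (nn j))"

lemma st_eq: "st k = nxt k (N0of k) (low k)"
  by (cases k) (simp_all add: N0of_def low_def nn_def TT_def)

lemma props:
  "nn k \<ge> N0of k \<and> (\<Sum>m<low k. norm (B (nn k) (E m))) < dl k \<and> finite (II k) \<and> II k \<subseteq> {low k..<LL k} \<and>
   (\<Sum>i\<in>II k. (cmod (AA k i))\<^sup>2) \<le> 1 \<and> \<eta> \<le> norm (P {..<LL k} (A (nn k) (comb (II k) (AA k)))) \<and>
   TT k = max (Suc (max (low k) (LL k))) (cN (nn k) (dl k))"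
proof -
  obtain n I \<alpha> L where eq: "stp (N0of k) (low k) (dl k) = (n, I, \<alpha>, L)" by (cases "stp (N0of k) (low k) (dl k)") blast
  have s: "st k = (n, I, \<alpha>, L, max (Suc (max (low k) L)) (cN n (dl k)))"
    unfolding st_eq nxt_def eq by simp
  show ?thesis using stp[OF dl_pos eq] s
    by (simp add: nn_def II_def AA_def LL_def TT_def)
qed

lemma nn_Suc: "nn k < nn (Suc k)" using props[of "Suc k"] by (simp add: N0of_def)
lemma nn_mono: "strict_mono nn" unfolding strict_mono_Suc_iff using nn_Suc by blast
lemma TT_gt: "TT k > low k" "TT k > LL k" "TT k \<ge> cN (nn k) (dl k)"
  using props[of k] by auto
lemma TT_Suc: "TT k < TT (Suc k)" using TT_gt(1)[of "Suc k"] by (simp add: low_def)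
lemma TT_mono: "j \<le> k \<Longrightarrow> TT j \<le> TT k"
  by (rule lift_Suc_mono_le[of TT]) (simp_all add: TT_Suc less_imp_le)
lemma low_ge: "low k \<ge> k"
proof (induction k)
  case 0 thus ?case by simp
next
  case (Suc k)
  have "TT k > low k" by (rule TT_gt(1))
  thus ?case using Suc by (simp add: low_def)
qed
lemma low_TT: "j < k \<Longrightarrow> TT j \<le> low k"
proof -
  assume "j < k"
  then obtain k' where k: "k = Suc k'" "j \<le> k'" by (cases k) auto
  thus ?thesis using TT_mono[of j k'] by (simp add: low_def)
qed
lemma II_props: "finite (II k)" "II k \<subseteq> {low k..<LL k}" "(\<Sum>i\<in>II k. (cmod (AA k i))\<^sup>2) \<le> 1"
  using props[of k] by auto
lemma AA_le1: "i \<in> II k \<Longrightarrow> cmod (AA k i) \<le> 1"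
  by (rule coef_le1[OF II_props(1) II_props(3)])

abbreviation "Ph k \<equiv> Phi (II k) (AA k) (LL k)"

lemma cross_gt:
  assumes "k < j" shows "norm (Ph k (B (nn j))) \<le> 2 * dl j"
proof -
  have "LL k < TT k" by (rule TT_gt(2))
  also have "TT k \<le> low j" by (rule low_TT[OF assms])
  finally have "II k \<subseteq> {..<low j}" using II_props(2)[of k] by auto
  hence "norm (Ph k (B (nn j))) \<le> 2 * (\<Sum>m<low j. norm (B (nn j) (E m)))"
    by (intro Phi_bound1[OF bB II_props(1)] AA_le1) simp_all
  also have "\<dots> \<le> 2 * dl j" using props[of j] by simp
  finally show ?thesis .
qed

lemma cross_lt:
  assumes "j < k" shows "norm (Ph k (B (nn j))) \<le> 2 * dl j"
proof -
  have "cN (nn j) (dl j) \<le> TT j" by (rule TT_gt(3))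
  also have "TT j \<le> low k" by (rule low_TT[OF assms])
  finally have c: "cN (nn j) (dl j) \<le> low k" .
  have "II k \<subseteq> {low k..}" using II_props(2)[of k] by auto
  thus ?thesis
    by (intro Phi_bound2[OF II_props(1) _ II_props(3) cN_mono[OF dl_pos c]])
qed

lemma cross: "j \<noteq> k \<Longrightarrow> norm (Ph k (B (nn j))) \<le> 2 * dl j"
  using cross_gt cross_lt by (cases "j < k") auto

lemma diag_k: "norm (Ph k (B (nn k))) \<ge> \<eta>"
proof -
  define x where "x = comb (II k) (AA k)"
  have "P {..<LL k} (A (nn k) x) = - Ph k (B (nn k))"
  proof -
    have "P {..<LL k} (A (nn k) x) = P {..<LL k} (CE (nn k) x) - P {..<LL k} (B (nn k) x)"
      unfolding A_def by (rule P_diff)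
    also have "P {..<LL k} (CE (nn k) x) = comb (II k) (\<lambda>i. AA k i * cinner (B (nn k) (E i)) (E i))"
      unfolding x_def CE_comb[OF II_props(1)] by (rule P_comb[OF II_props(1)]) (use II_props(2)[of k] in auto)
    finally show ?thesis unfolding Phi_def x_def by simp
  qed
  hence "norm (P {..<LL k} (A (nn k) x)) = norm (Ph k (B (nn k)))" by simp
  thus ?thesis using props[of k] by (simp add: x_def)
qed

lemma geom: "finite J \<Longrightarrow> (\<Sum>j\<in>J. 2 * dl j) \<le> \<eta> / 4"
proof -
  assume J: "finite J"
  have "(\<Sum>j\<in>J. 2 * dl j) = (\<eta> / 8) * (\<Sum>j\<in>J. (1/2::real) ^ j)"
    by (simp add: dl_def sum_distrib_left power_add power_one_over field_simps)
  also have "(\<Sum>j\<in>J. (1/2::real) ^ j) \<le> (\<Sum>j. (1/2::real) ^ j)"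
    by (rule sum_le_suminf[OF summable_geometric J]) simp_all
  also have "(\<Sum>j. (1/2::real) ^ j) = 2" by (simp add: suminf_geometric)
  finally show ?thesis using eta_pos by simp
qed

end

context mainl
begin

lemma contradiction: False
proof -
  obtain S where S: "has_sot_sum b (range nn) S" and Sd: "in_diag_plus_compact ev S"
    using H[of "range nn"] by (elim exE conjE)
  from Sd obtain d c where d: "diag_op ev d" and c: "compact_op c" and Sdc: "\<forall>x\<in>ell2. S x = d x + c x"
    unfolding in_diag_plus_compact_def by (elim exE conjE)
  have db: "bounded_op d" using d by (simp add: diag_op_def)
  have cbd: "bounded_op c" using c by (simp add: compact_op_def)
  define SS where "SS = op S"
  define D where "D = op d"
  define Cc where "Cc = op c"
  have SSeq: "SS = (\<lambda>x. D x + Cc x)"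
  proof
    fix x
    have "SS x = mk (d (vec x) + c (vec x))" unfolding SS_def op_def using Sdc vec[of x] by simp
    also have "\<dots> = D x + Cc x" unfolding D_def Cc_def op_def
      by (rule mk_add) (rule bounded_op_ell2[OF db vec], rule bounded_op_ell2[OF cbd vec])
    finally show "SS x = D x + Cc x" .
  qed
  have bD: "bop D" unfolding D_def by (rule bop_op[OF db])
  have Dd: "\<exists>\<mu>. D (E i) = cscale \<mu> (E i)" for i
  proof -
    have "\<forall>n. \<exists>c. d (ev n) = scaleC_vec c (ev n)" using d by (simp add: diag_op_def)
    then obtain \<mu> where \<mu>: "d (ev i) = scaleC_vec \<mu> (ev i)" by blast
    have "D (E i) = cscale \<mu> (E i)" unfolding D_def op_def \<mu> by (simp add: mk_scale vec mk_vec)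
    thus ?thesis by (rule exI)
  qed
  have e8: "\<eta> / 8 > 0" using eta_pos by simp
  obtain Nc where Nc: "\<forall>I \<alpha>. finite I \<and> I \<subseteq> {Nc..} \<and> (\<Sum>i\<in>I. (cmod (\<alpha> i))\<^sup>2) \<le> 1
           \<longrightarrow> norm (op c (comb I \<alpha>)) < \<eta> / 8"
    using compact_small[OF c e8] by (elim exE)
  define k where "k = Suc Nc"
  have lowk: "Nc \<le> low k" using low_ge[of k] by (simp add: k_def)
  have Ik: "II k \<subseteq> {Nc..}" using II_props(2)[of k] lowk by auto
  have PhiC: "norm (Ph k Cc) \<le> 2 * (\<eta> / 8)"
    unfolding Cc_def by (rule Phi_bound2[OF II_props(1) Ik II_props(3) Nc])
  have PhiD: "Ph k D = 0"
    by (rule Phi_diag[OF bD Dd II_props(1)]) (use II_props(2)[of k] in auto)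
  have PhiS: "Ph k SS = Ph k Cc" unfolding SSeq Phi_add PhiD by simp
  define x where "x = comb (II k) (AA k)"
  define I where "I = II k"
  have fI: "finite I" unfolding I_def by (rule II_props(1))
  define e' where "e' = \<eta> / (8 * (real (card I) + 1))"
  have e'p: "e' > 0" unfolding e'_def using eta_pos by simp
  have SSB: "norm (SS y - (\<Sum>n\<in>F. op (b n) y)) = norm (SS y - (\<Sum>n\<in>F. B n y))" for y F
    by (simp add: B_def)
  obtain F0x where F0x: "finite F0x" "F0x \<subseteq> range nn"
    "\<forall>F. finite F \<and> F0x \<subseteq> F \<and> F \<subseteq> range nn \<longrightarrow> norm (op S x - (\<Sum>n\<in>F. op (b n) x)) < e'"
    using sot_l2[OF S bb e'p, of x] by (elim exE conjE) (rule that, assumption+)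
  have "\<forall>i\<in>I. \<exists>F0. finite F0 \<and> F0 \<subseteq> range nn \<and>
     (\<forall>F. finite F \<and> F0 \<subseteq> F \<and> F \<subseteq> range nn \<longrightarrow> norm (op S (E i) - (\<Sum>n\<in>F. op (b n) (E i))) < e')"
    using sot_l2[OF S bb e'p] by (intro ballI)
  from bchoice[OF this] obtain f where f: "\<forall>i\<in>I. finite (f i) \<and> f i \<subseteq> range nn \<and>
     (\<forall>F. finite F \<and> f i \<subseteq> F \<and> F \<subseteq> range nn \<longrightarrow> norm (op S (E i) - (\<Sum>n\<in>F. op (b n) (E i))) < e')" ..
  define F where "F = F0x \<union> (\<Union>i\<in>I. f i) \<union> {nn k}"
  have fF: "finite F" unfolding F_def using F0x(1) fI f by auto
  have FM: "F \<subseteq> range nn" unfolding F_def using F0x(2) f by auto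
  have nkF: "nn k \<in> F" unfolding F_def by simp
  define G where "G y = SS y - (\<Sum>n\<in>F. B n y)" for y
  have Gx: "norm (G x) < e'"
  proof -
    have "finite F \<and> F0x \<subseteq> F \<and> F \<subseteq> range nn" using fF FM by (auto simp: F_def)
    with F0x(3) have "norm (op S x - (\<Sum>n\<in>F. op (b n) x)) < e'" by blast
    thus ?thesis unfolding G_def SS_def by (simp add: B_def)
  qed
  have GE: "norm (G (E i)) < e'" if i: "i \<in> I" for i
  proof -
    have fi: "finite (f i) \<and> f i \<subseteq> range nn \<and>
     (\<forall>F. finite F \<and> f i \<subseteq> F \<and> F \<subseteq> range nn \<longrightarrow> norm (op S (E i) - (\<Sum>n\<in>F. op (b n) (E i))) < e')"
      using f i by (rule bspec)
    have "finite F \<and> f i \<subseteq> F \<and> F \<subseteq> range nn" using fF FM i by (auto simp: F_def)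
    with fi have "norm (op S (E i) - (\<Sum>n\<in>F. op (b n) (E i))) < e'" by blast
    thus ?thesis unfolding G_def SS_def by (simp add: B_def)
  qed
  have PhiG: "norm (Ph k G) \<le> \<eta> / 8"
  proof -
    have "norm (Ph k G) \<le> norm (G x) + (\<Sum>i\<in>I. norm (G (E i)))"
      unfolding x_def I_def by (rule Phi_bound0[OF II_props(1) AA_le1])
    also have "(\<Sum>i\<in>I. norm (G (E i))) \<le> (\<Sum>i\<in>I. e')"
      by (rule sum_mono) (simp add: GE less_imp_le)
    also have "(\<Sum>i\<in>I. e') = real (card I) * e'" by simp
    finally have "norm (Ph k G) \<le> e' + real (card I) * e'" using Gx by simp
    also have "e' + real (card I) * e' = (real (card I) + 1) * e'" by (simp add: algebra_simps)
    also have "\<dots> = \<eta> / 8"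
    proof -
      have cp: "real (card I) + 1 \<noteq> 0" using of_nat_0_le_iff[of "card I"] by linarith
      show ?thesis unfolding e'_def using cp by (simp add: field_simps)
    qed
    finally show ?thesis .
  qed
  have Gsplit: "Ph k G = Ph k SS - (Ph k (B (nn k)) + (\<Sum>n\<in>F - {nn k}. Ph k (B n)))"
  proof -
    have "Ph k G = Ph k SS - Ph k (\<lambda>y. \<Sum>n\<in>F. B n y)"
      unfolding G_def[abs_def] by (rule Phi_diff)
    also have "Ph k (\<lambda>y. \<Sum>n\<in>F. B n y) = (\<Sum>n\<in>F. Ph k (B n))" by (rule Phi_sum)
    also have "\<dots> = Ph k (B (nn k)) + (\<Sum>n\<in>F - {nn k}. Ph k (B n))"
      by (rule sum.remove[OF fF nkF])
    finally show ?thesis .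
  qed
  have rest: "norm (\<Sum>n\<in>F - {nn k}. Ph k (B n)) \<le> \<eta> / 4"
  proof -
    have inj: "inj nn" using nn_mono by (rule strict_mono_imp_inj_on)
    define J where "J = (nn -` F) - {k}"
    have fJ: "finite J" unfolding J_def using finite_vimageI[OF fF inj] by simp
    have FJ: "F - {nn k} = nn ` J"
    proof
      show "F - {nn k} \<subseteq> nn ` J"
      proof
        fix n assume n: "n \<in> F - {nn k}"
        then obtain j where j: "n = nn j" using FM by blast
        hence "j \<in> J" using n by (auto simp: J_def)
        thus "n \<in> nn ` J" using j by blast
      qed
      show "nn ` J \<subseteq> F - {nn k}"
        using inj by (auto simp: J_def inj_eq)
    qed
    have "norm (\<Sum>n\<in>F - {nn k}. Ph k (B n)) \<le> (\<Sum>n\<in>F - {nn k}. norm (Ph k (B n)))"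
      by (rule norm_sum)
    also have "\<dots> = (\<Sum>j\<in>J. norm (Ph k (B (nn j))))"
      unfolding FJ by (rule sum.reindex[OF inj_on_subset[OF inj subset_UNIV], unfolded comp_def])
    also have "\<dots> \<le> (\<Sum>j\<in>J. 2 * dl j)"
      by (rule sum_mono) (rule cross, simp add: J_def)
    also have "\<dots> \<le> \<eta> / 4" by (rule geom[OF fJ])
    finally show ?thesis .
  qed
  have low1: "\<eta> \<le> norm (Ph k (B (nn k)))" by (rule diag_k)
  have "norm (Ph k (B (nn k))) \<le> norm (Ph k SS) + norm (Ph k G) + norm (\<Sum>n\<in>F - {nn k}. Ph k (B n))"
  proof -
    have "Ph k (B (nn k)) = Ph k SS - Ph k G - (\<Sum>n\<in>F - {nn k}. Ph k (B n))"
      unfolding Gsplit by simp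
    hence "norm (Ph k (B (nn k))) \<le> norm (Ph k SS - Ph k G) + norm (\<Sum>n\<in>F - {nn k}. Ph k (B n))"
      by (simp only: norm_triangle_ineq4)
    moreover have "norm (Ph k SS - Ph k G) \<le> norm (Ph k SS) + norm (Ph k G)" by (rule norm_triangle_ineq4)
    ultimately show ?thesis by linarith
  qed
  hence "5 * \<eta> / 8 \<le> norm (Ph k SS)" using low1 PhiG rest by simp
  hence "5 * \<eta> / 8 \<le> \<eta> / 4" using PhiS PhiC by simp
  thus False using eta_pos by simp
qed

end

lemma bounded_op_diff:
  assumes T1: "bounded_op T1" and T2: "bounded_op T2"
  shows "bounded_op (\<lambda>x. T1 x - T2 x)"
proof -
  obtain K1 where K1: "\<forall>x\<in>ell2. l2norm (T1 x) \<le> K1 * l2norm x" using T1 by (auto simp: bounded_op_def)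
  obtain K2 where K2: "\<forall>x\<in>ell2. l2norm (T2 x) \<le> K2 * l2norm x" using T2 by (auto simp: bounded_op_def)
  show ?thesis unfolding bounded_op_def
  proof (intro conjI ballI allI)
    fix x assume x: "x \<in> ell2"
    show "T1 x - T2 x \<in> ell2" by (rule ell2_diff[OF bounded_op_ell2[OF T1 x] bounded_op_ell2[OF T2 x]])
  next
    fix x y assume x: "x \<in> ell2" and y: "y \<in> ell2"
    have "T1 (x + y) = T1 x + T1 y" "T2 (x + y) = T2 x + T2 y"
      using T1 T2 x y by (simp_all add: bounded_op_def)
    thus "T1 (x + y) - T2 (x + y) = T1 x - T2 x + (T1 y - T2 y)" by (simp add: algebra_simps)
  next
    fix c x assume x: "x \<in> ell2"
    have "T1 (scaleC_vec c x) = scaleC_vec c (T1 x)" "T2 (scaleC_vec c x) = scaleC_vec c (T2 x)"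
      using T1 T2 x by (simp_all add: bounded_op_def)
    thus "T1 (scaleC_vec c x) - T2 (scaleC_vec c x) = scaleC_vec c (T1 x - T2 x)"
      by (simp add: scaleC_vec_def fun_eq_iff right_diff_distrib)
  next
    show "\<exists>K. \<forall>x\<in>ell2. l2norm (T1 x - T2 x) \<le> K * l2norm x"
    proof (intro exI ballI)
      fix x assume x: "x \<in> ell2"
      have a: "T1 x \<in> ell2" "T2 x \<in> ell2" using bounded_op_ell2[OF T1 x] bounded_op_ell2[OF T2 x] by auto
      have "l2norm (T1 x - T2 x) = norm (mk (T1 x) - mk (T2 x))"
        by (simp add: l2norm_mk[OF ell2_diff[OF a]] mk_diff[OF a])
      also have "\<dots> \<le> norm (mk (T1 x)) + norm (mk (T2 x))" by (rule norm_triangle_ineq4)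
      also have "\<dots> = l2norm (T1 x) + l2norm (T2 x)" by (simp add: l2norm_mk[OF a(1)] l2norm_mk[OF a(2)])
      also have "\<dots> \<le> K1 * l2norm x + K2 * l2norm x" using K1 K2 x by (intro add_mono) auto
      finally show "l2norm (T1 x - T2 x) \<le> (K1 + K2) * l2norm x" by (simp add: distrib_right)
    qed
  qed
qed

lemma op_diff: "bounded_op T1 \<Longrightarrow> bounded_op T2 \<Longrightarrow> op (\<lambda>x. T1 x - T2 x) x = op T1 x - op T2 x"
  unfolding op_def by (rule mk_diff) (rule bounded_op_ell2, assumption, rule vec)+

lemma opnorm_le:
  assumes T: "bounded_op T" and le: "\<And>x. norm x \<le> 1 \<Longrightarrow> norm (op T x) \<le> \<epsilon>"
  shows "opnorm T \<le> \<epsilon>"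
  unfolding opnorm_def
proof (rule cSUP_least)
  show "{x \<in> ell2. l2norm x \<le> 1} \<noteq> {}"
  proof -
    have "(0::nat\<Rightarrow>complex) \<in> {x \<in> ell2. l2norm x \<le> 1}"
      using ell2_zero l2norm_mk[OF ell2_zero] by (simp add: mk_zero)
    thus ?thesis by blast
  qed
  fix f assume f: "f \<in> {x \<in> ell2. l2norm x \<le> 1}"
  hence fe: "f \<in> ell2" and f1: "norm (mk f) \<le> 1" using l2norm_mk by auto
  have "l2norm (T f) = norm (op T (mk f))"
    by (simp add: op_def mk_inverse[OF fe] l2norm_mk bounded_op_ell2[OF T fe])
  also have "\<dots> \<le> \<epsilon>" by (rule le[OF f1])
  finally show "l2norm (T f) \<le> \<epsilon>" .
qed

lemma opnorm_ge0:
  assumes T: "bounded_op T"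
  shows "0 \<le> opnorm T"
proof -
  interpret bopl "op T" by (rule bopl.intro[OF bop_op[OF T]])
  have val: "l2norm (T f) = norm (op T (mk f))" if fe: "f \<in> ell2" for f
    by (simp add: op_def mk_inverse[OF fe] l2norm_mk bounded_op_ell2[OF T fe])
  have bdd: "bdd_above ((\<lambda>x. l2norm (T x)) ` {x \<in> ell2. l2norm x \<le> 1})"
  proof (rule bdd_aboveI2)
    fix f assume f: "f \<in> {x \<in> ell2. l2norm x \<le> 1}"
    hence fe: "f \<in> ell2" and f1: "norm (mk f) \<le> 1" using l2norm_mk by auto
    have "l2norm (T f) \<le> bnd * norm (mk f)" using val[OF fe] bnd(2) by simp
    also have "\<dots> \<le> bnd * 1" by (rule mult_left_mono[OF f1 bnd(1)])
    finally show "l2norm (T f) \<le> bnd" by simp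
  qed
  have z: "(0::nat\<Rightarrow>complex) \<in> {x \<in> ell2. l2norm x \<le> 1}"
    using ell2_zero l2norm_mk[OF ell2_zero] by (simp add: mk_zero)
  have "0 \<le> l2norm (T 0)" using val[OF ell2_zero] by simp
  also have "\<dots> \<le> opnorm T" unfolding opnorm_def by (rule cSUP_upper[OF z bdd])
  finally show ?thesis .
qed

theorem lemma2p1:
  fixes e :: "nat \<Rightarrow> (nat \<Rightarrow> complex)"
    and b :: "nat \<Rightarrow> ((nat \<Rightarrow> complex) \<Rightarrow> (nat \<Rightarrow> complex))"
  assumes "onb e"
    and "\<And>n. compact_op (b n)"
    and "sot_null b"
    and "\<And>M. \<exists>S. has_sot_sum b M S \<and> in_diag_plus_compact e S"
  shows "(\<lambda>n. opnorm (\<lambda>x. cond_exp e (b n) x - b n x)) \<longlonglongrightarrow> 0"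
proof -
  note onb = assms(1) and cb = assms(2) and sn = assms(3) and H = assms(4)
  have eell: "e n \<in> ell2" for n using onb by (simp add: onb_def)
  define E where "E n = mk (e n)" for n
  have ev: "(\<lambda>n. vec (E n)) = e" by (simp add: E_def mk_inverse eell)
  interpret onbl E
  proof
    show "cinner (E m) (E n) = (if m = n then 1 else 0)" for m n
      using onb by (simp add: onb_def cinner_def E_def mk_inverse eell)
    show "x = 0" if h: "\<And>n. cinner x (E n) = 0" for x
    proof -
      have "\<forall>x\<in>ell2. (\<forall>n. l2inner x (e n) = 0) \<longrightarrow> x = 0" using onb by (simp add: onb_def)
      moreover have "\<forall>n. l2inner (vec x) (e n) = 0"
        using h by (simp add: cinner_def E_def mk_inverse eell)
      ultimately have "vec x = 0" using vec[of x] by blast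
      thus "x = 0" by (simp add: vec_zero[symmetric] vec_inject)
    qed
  qed
  have H': "\<And>M. \<exists>S. has_sot_sum b M S \<and> in_diag_plus_compact ev S"
    using H unfolding ev .
  have bb: "bounded_op (b n)" for n using cb[of n] by (simp add: compact_op_def)
  have CEb: "bounded_op (cond_exp ev (b n))" for n
  proof -
    have "has_sot_sum (\<lambda>m. proj ev m \<circ> b n \<circ> proj ev m) UNIV (cond_exp ev (b n))"
      unfolding cond_exp_def by (rule someI_ex[OF cond_exp_ex[OF bb]])
    thus ?thesis by (simp add: has_sot_sum_def)
  qed
  have main: "\<exists>N. \<forall>n\<ge>N. \<forall>x. norm x \<le> 1 \<longrightarrow> norm (op (cond_exp ev (b n)) x - op (b n) x) \<le> \<epsilon>"
    if \<epsilon>: "\<epsilon> > 0" for \<epsilon>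
  proof (rule ccontr)
    assume "\<not> ?thesis"
    hence bad: "\<exists>n\<ge>N. \<exists>x. norm x \<le> 1 \<and> \<epsilon> < norm (op (cond_exp ev (b n)) x - op (b n) x)" for N
      by (auto simp: not_le)
    interpret mainl E b \<epsilon>
      by (rule mainl.intro[OF onbl_axioms], rule mainl_axioms.intro[OF cb sn H' \<epsilon> bad])
    show False by (rule contradiction)
  qed
  show ?thesis
    unfolding ev[symmetric]
  proof (rule LIMSEQ_I)
    fix r :: real assume r: "0 < r"
    obtain N where N: "\<forall>n\<ge>N. \<forall>x. norm x \<le> 1 \<longrightarrow> norm (op (cond_exp ev (b n)) x - op (b n) x) \<le> r / 2"
      using main[of "r / 2"] r by auto
    have "norm (opnorm (\<lambda>x. cond_exp ev (b n) x - b n x) - 0) < r" if n: "n \<ge> N" for n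
    proof -
      have Tb: "bounded_op (\<lambda>x. cond_exp ev (b n) x - b n x)" by (rule bounded_op_diff[OF CEb bb])
      have "opnorm (\<lambda>x. cond_exp ev (b n) x - b n x) \<le> r / 2"
      proof (rule opnorm_le[OF Tb])
        fix x :: l2 assume "norm x \<le> 1"
        thus "norm (op (\<lambda>x. cond_exp ev (b n) x - b n x) x) \<le> r / 2"
          using N n by (simp add: op_diff[OF CEb bb])
      qed
      moreover have "0 \<le> opnorm (\<lambda>x. cond_exp ev (b n) x - b n x)" by (rule opnorm_ge0[OF Tb])
      ultimately show ?thesis using r by simp
    qed
    thus "\<exists>no. \<forall>n\<ge>no. norm (opnorm (\<lambda>x. cond_exp ev (b n) x - b n x) - 0) < r" by blast
  qed
qed

end
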